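(* Let $0<r'<r<1$. The map of condensed abelian groups $\theta_{r'}:\mathbb{Z}((T))_r\to\underline{\mathbb{R}}$, given on $S$-valued points by $\sum a_nT^n\mapsto\big(s\mapsto\sum a_n(s)(r')^n\big)$, is surjective (at every extremally disconnected $S$), and for every extremally disconnected $S$ its kernel on $S$-valued points is a principal ideal of the ring $\mathbb{Z}((T))_r(S)$ generated by a non-zero divisor.
   Context: Extremally disconnected sets are the projective objects in the category of compact Hausdorff spaces. For $0<r<1$, $c>0$ and extremally disconnected $S$, let $\mathbb{Z}((T))_{r,\le c}(S)$ be the set of formal sums $\sum_{n\ge k}a_nT^n$ (for some $k\in\mathbb{Z}$) with $a_n\in C(S,\mathbb{Z})$ such that $\sum_n|a_n(s)|r^n\le c$ for all $s\in S$; set $\mathbb{Z}((T))_r(S)=\bigcup_{c>0}\mathbb{Z}((T))_{r,\le c}(S)$, a ring under addition and multiplication of Laurent series, and this defines a condensed ring $\mathbb{Z}((T))_r$. $\underline{\mathbb{R}}$ is the condensed ring $S\mapsto C(S,\mathbb{R})$. *)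

theory Defs
  imports "HOL-Analysis.Analysis"
begin

definition extremally_disconnected :: "'a topology \<Rightarrow> bool" where
  "extremally_disconnected X \<longleftrightarrow>
     compact_space X \<and> Hausdorff_space X \<and>
     (\<forall>U. openin X U \<longrightarrow> openin X (X closure_of U))"

text \<open>Elements of Z((T))_r(S): a Laurent series sum a_n T^n is represented by its coefficient
  family a :: int => 'a => int; each a_n is a continuous (locally constant) integer function on S,
  set to 0 outside the underlying set of S; coefficients vanish below some index k; and there is c
  with sum_n |a_n(s)| r^n <= c for all s.\<close>
definition ZT :: "'a topology \<Rightarrow> real \<Rightarrow> (int \<Rightarrow> 'a \<Rightarrow> int) set" where
  "ZT X r = {a.
     (\<forall>n. continuous_map X (discrete_topology UNIV) (a n)) \<and>
     (\<forall>n s. s \<notin> topspace X \<longrightarrow> a n s = 0) \<and>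
     (\<exists>k. \<forall>n<k. \<forall>s. a n s = 0) \<and>
     (\<exists>c. \<forall>s\<in>topspace X.
        (\<lambda>n. real_of_int \<bar>a n s\<bar> * r powi n) summable_on UNIV \<and>
        (\<Sum>\<^sub>\<infinity>n. real_of_int \<bar>a n s\<bar> * r powi n) \<le> c)}"

text \<open>Multiplication of Laurent series (Cauchy product, pointwise in s; the sum is finite
  for series bounded below).\<close>
definition ls_mult :: "(int \<Rightarrow> 'a \<Rightarrow> int) \<Rightarrow> (int \<Rightarrow> 'a \<Rightarrow> int) \<Rightarrow> (int \<Rightarrow> 'a \<Rightarrow> int)" where
  "ls_mult a b = (\<lambda>n s. \<Sum>i\<in>{i. a i s \<noteq> 0 \<and> b (n - i) s \<noteq> 0}. a i s * b (n - i) s)"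

definition theta :: "real \<Rightarrow> (int \<Rightarrow> 'a \<Rightarrow> int) \<Rightarrow> 'a \<Rightarrow> real" where
  "theta r' a = (\<lambda>s. \<Sum>\<^sub>\<infinity>n. real_of_int (a n s) * r' powi n)"

end

theory Submission
  imports Defs
begin

unbundle no vec_syntax
unbundle fps_syntax



definition lcst :: "'a topology \<Rightarrow> ('a \<Rightarrow> 'b) \<Rightarrow> bool" where
  "lcst X h \<longleftrightarrow> (\<forall>s\<in>topspace X. \<exists>V. openin X V \<and> s \<in> V \<and> (\<forall>t\<in>V. h t = h s))"

lemma lcst_imp_cont:
  assumes "lcst X h" shows "continuous_map X (discrete_topology UNIV) h"
  unfolding continuous_map
proof (intro conjI allI impI)
  fix U :: "'b set"
  show "openin X {x \<in> topspace X. h x \<in> U}"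
  proof (subst openin_subopen, intro ballI)
    fix x assume x: "x \<in> {x \<in> topspace X. h x \<in> U}"
    then obtain V where V: "openin X V" "x \<in> V" "\<forall>t\<in>V. h t = h x"
      using assms unfolding lcst_def by blast
    then have "V \<subseteq> {x \<in> topspace X. h x \<in> U}" using x openin_subset by fastforce
    then show "\<exists>T. openin X T \<and> x \<in> T \<and> T \<subseteq> {x \<in> topspace X. h x \<in> U}" using V by blast
  qed
qed auto

lemma cont_imp_lcst:
  assumes "continuous_map X (discrete_topology UNIV) h" shows "lcst X h"
  unfolding lcst_def
proof
  fix s assume s: "s \<in> topspace X"
  have "\<forall>U. openin X {x \<in> topspace X. h x \<in> U}"
    using assms unfolding continuous_map by simp
  then have "openin X {x \<in> topspace X. h x \<in> {h s}}" by (rule spec)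
  then show "\<exists>V. openin X V \<and> s \<in> V \<and> (\<forall>t\<in>V. h t = h s)" using s by (intro exI[of _ "{x \<in> topspace X. h x \<in> {h s}}"]) auto
qed

lemma lcst_const: "lcst X (\<lambda>s. c)"
  unfolding lcst_def by auto

lemma lcst_comp: "lcst X h \<Longrightarrow> lcst X (\<lambda>s. f (h s))"
  unfolding lcst_def by metis

lemma lcst_op: assumes "lcst X h" "lcst X k" shows "lcst X (\<lambda>s. f (h s) (k s))"
  unfolding lcst_def
proof
  fix s assume s: "s \<in> topspace X"
  obtain V where V: "openin X V" "s \<in> V" "\<forall>t\<in>V. h t = h s" using assms(1) s unfolding lcst_def by blast
  obtain W where W: "openin X W" "s \<in> W" "\<forall>t\<in>W. k t = k s" using assms(2) s unfolding lcst_def by blast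
  have "openin X (V \<inter> W)" using V W by blast
  moreover have "\<forall>t\<in>V \<inter> W. f (h t) (k t) = f (h s) (k s)"
  proof
    fix t assume "t \<in> V \<inter> W"
    then have "h t = h s" "k t = k s" using V W by blast+
    then show "f (h t) (k t) = f (h s) (k s)" by (simp only:)
  qed
  ultimately show "\<exists>V. openin X V \<and> s \<in> V \<and> (\<forall>t\<in>V. f (h t) (k t) = f (h s) (k s))"
    using V W by blast
qed

lemma lcst_sum: assumes "finite I" "\<And>i. i \<in> I \<Longrightarrow> lcst X (h i)"
  shows "lcst X (\<lambda>s. \<Sum>i\<in>I. h i s :: 'b::comm_monoid_add)"
  using assms
proof (induction I rule: finite_induct)
  case empty then show ?case by (simp add: lcst_const)
next
  case (insert x F)
  have "lcst X (h x)" using insert by auto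
  from lcst_op[OF this insert.IH, of "(+)"] insert show ?case by simp
qed

lemma lcst_cont_real:
  assumes "lcst X h" shows "continuous_map X euclideanreal h"
  unfolding continuous_map
proof (intro conjI allI impI)
  fix U :: "real set" assume "openin euclideanreal U"
  show "openin X {x \<in> topspace X. h x \<in> U}"
  proof (subst openin_subopen, intro ballI)
    fix x assume x: "x \<in> {x \<in> topspace X. h x \<in> U}"
    then obtain V where V: "openin X V" "x \<in> V" "\<forall>t\<in>V. h t = h x"
      using assms unfolding lcst_def by blast
    then have "V \<subseteq> {x \<in> topspace X. h x \<in> U}" using x openin_subset by fastforce
    then show "\<exists>T. openin X T \<and> x \<in> T \<and> T \<subseteq> {x \<in> topspace X. h x \<in> U}" using V by blast
  qed
qed auto


lemma fps_cauchy:
  fixes F G :: "real fps" and \<rho> :: real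
  assumes r: "\<rho> \<ge> 0" and sF: "summable (\<lambda>n. \<bar>F$n\<bar> * \<rho>^n)" and sG: "summable (\<lambda>n. \<bar>G$n\<bar> * \<rho>^n)"
  shows "summable (\<lambda>n. \<bar>(F*G)$n\<bar> * \<rho>^n)"
    and "(\<Sum>n. \<bar>(F*G)$n\<bar> * \<rho>^n) \<le> (\<Sum>n. \<bar>F$n\<bar> * \<rho>^n) * (\<Sum>n. \<bar>G$n\<bar> * \<rho>^n)"
    and "(\<Sum>n. (F*G)$n * \<rho>^n) = (\<Sum>n. F$n * \<rho>^n) * (\<Sum>n. G$n * \<rho>^n)"
proof -
  have nF: "summable (\<lambda>n. norm (F$n * \<rho>^n))" using sF r by (simp add: abs_mult)
  have nG: "summable (\<lambda>n. norm (G$n * \<rho>^n))" using sG r by (simp add: abs_mult)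
  have eq: "(\<Sum>i\<le>k. (F$i * \<rho>^i) * (G$(k-i) * \<rho>^(k-i))) = (F*G)$k * \<rho>^k" for k
  proof -
    have "(\<Sum>i\<le>k. (F$i * \<rho>^i) * (G$(k-i) * \<rho>^(k-i))) = (\<Sum>i\<le>k. F$i * G$(k-i) * \<rho>^k)"
      by (intro sum.cong refl) (simp add: power_add[symmetric])
    also have "\<dots> = (F*G)$k * \<rho>^k" by (simp add: fps_mult_nth sum_distrib_right atLeast0AtMost)
    finally show ?thesis .
  qed
  have eqa: "(\<Sum>i\<le>k. (\<bar>F$i\<bar> * \<rho>^i) * (\<bar>G$(k-i)\<bar> * \<rho>^(k-i))) = (\<Sum>i\<le>k. \<bar>F$i\<bar> * \<bar>G$(k-i)\<bar>) * \<rho>^k" for k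
  proof -
    have "(\<Sum>i\<le>k. (\<bar>F$i\<bar> * \<rho>^i) * (\<bar>G$(k-i)\<bar> * \<rho>^(k-i))) = (\<Sum>i\<le>k. \<bar>F$i\<bar> * \<bar>G$(k-i)\<bar> * \<rho>^k)"
      by (intro sum.cong refl) (simp add: power_add[symmetric])
    then show ?thesis by (simp add: sum_distrib_right)
  qed
  have nFa: "summable (\<lambda>n. norm (\<bar>F$n\<bar> * \<rho>^n))" using sF r by (simp add: abs_mult)
  have nGa: "summable (\<lambda>n. norm (\<bar>G$n\<bar> * \<rho>^n))" using sG r by (simp add: abs_mult)
  have S: "summable (\<lambda>k. (\<Sum>i\<le>k. \<bar>F$i\<bar> * \<bar>G$(k-i)\<bar>) * \<rho>^k)"
    using summable_Cauchy_product[OF nFa nGa] by (simp add: eqa)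
  have le: "\<bar>(F*G)$k\<bar> * \<rho>^k \<le> (\<Sum>i\<le>k. \<bar>F$i\<bar> * \<bar>G$(k-i)\<bar>) * \<rho>^k" for k
  proof -
    have "\<bar>(F*G)$k\<bar> \<le> (\<Sum>i\<le>k. \<bar>F$i\<bar> * \<bar>G$(k-i)\<bar>)"
      unfolding fps_mult_nth atLeast0AtMost by (rule order_trans[OF sum_abs]) (simp add: abs_mult)
    then show ?thesis using r by (simp add: mult_right_mono)
  qed
  show S1: "summable (\<lambda>n. \<bar>(F*G)$n\<bar> * \<rho>^n)"
    by (rule summable_comparison_test'[OF S, of 0]) (use le r in auto)
  have "(\<Sum>n. \<bar>(F*G)$n\<bar> * \<rho>^n) \<le> (\<Sum>k. (\<Sum>i\<le>k. \<bar>F$i\<bar> * \<bar>G$(k-i)\<bar>) * \<rho>^k)"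
    by (rule suminf_le[OF le S1 S])
  also have "\<dots> = (\<Sum>n. \<bar>F$n\<bar> * \<rho>^n) * (\<Sum>n. \<bar>G$n\<bar> * \<rho>^n)"
    using Cauchy_product[OF nFa nGa] by (simp add: eqa)
  finally show "(\<Sum>n. \<bar>(F*G)$n\<bar> * \<rho>^n) \<le> (\<Sum>n. \<bar>F$n\<bar> * \<rho>^n) * (\<Sum>n. \<bar>G$n\<bar> * \<rho>^n)" .
  show "(\<Sum>n. (F*G)$n * \<rho>^n) = (\<Sum>n. F$n * \<rho>^n) * (\<Sum>n. G$n * \<rho>^n)"
    using Cauchy_product[OF nF nG] by (simp add: eq)
qed




lemma int_nat_core:
  fixes y :: "int \<Rightarrow> real"
  assumes z: "\<forall>n<K. y n = 0"
  shows "y summable_on UNIV \<longleftrightarrow> summable (\<lambda>p. \<bar>y (K + int p)\<bar>)"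
    and "summable (\<lambda>p. \<bar>y (K + int p)\<bar>) \<Longrightarrow> infsum y UNIV = (\<Sum>p. y (K + int p))"
proof -
  have bij: "bij_betw (\<lambda>p::nat. K + int p) UNIV {K..}"
    by (rule bij_betw_byWitness[of _ "\<lambda>n. nat (n - K)"]) auto
  have e1: "y summable_on UNIV \<longleftrightarrow> y summable_on {K..}"
    by (rule summable_on_cong_neutral) (use z in auto)
  have e2: "y summable_on {K..} \<longleftrightarrow> (\<lambda>p. y (K + int p)) summable_on UNIV"
    using summable_on_reindex_bij_betw[OF bij, of y] by simp
  have e3: "(\<lambda>p. y (K + int p)) summable_on UNIV \<longleftrightarrow> (\<lambda>p. \<bar>y (K + int p)\<bar>) summable_on UNIV"
    using summable_on_iff_abs_summable_on_real[of "\<lambda>p. y (K + int p)" UNIV] by (simp only: real_norm_def)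
  have e4: "(\<lambda>p. \<bar>y (K + int p)\<bar>) summable_on UNIV \<longleftrightarrow> summable (\<lambda>p. \<bar>y (K + int p)\<bar>)"
    by (rule summable_on_UNIV_nonneg_real_iff) auto
  show "y summable_on UNIV \<longleftrightarrow> summable (\<lambda>p. \<bar>y (K + int p)\<bar>)"
    using e1 e2 e3 e4 by simp
  assume s: "summable (\<lambda>p. \<bar>y (K + int p)\<bar>)"
  have i1: "infsum y UNIV = infsum y {K..}"
    by (rule infsum_cong_neutral) (use z in auto)
  have i2: "infsum y {K..} = infsum (\<lambda>p. y (K + int p)) UNIV"
    using infsum_reindex_bij_betw[OF bij, of y] by simp
  have s': "summable (\<lambda>p. y (K + int p))" by (rule summable_rabs_cancel[OF s])
  have "((\<lambda>p. y (K + int p)) has_sum (\<Sum>p. y (K + int p))) UNIV"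
    by (rule norm_summable_imp_has_sum) (use s s' in \<open>auto simp: summable_sums\<close>)
  then have i3: "infsum (\<lambda>p. y (K + int p)) UNIV = (\<Sum>p. y (K + int p))"
    by (rule infsumI)
  show "infsum y UNIV = (\<Sum>p. y (K + int p))" using i1 i2 i3 by simp
qed


lemma int_nat_sum:
  fixes x :: "int \<Rightarrow> real" and \<rho> :: real
  assumes r: "\<rho> > 0" and z: "\<forall>n<K. x n = 0"
  shows "(\<lambda>n. \<bar>x n\<bar> * \<rho> powi n) summable_on UNIV \<longleftrightarrow> summable (\<lambda>p. \<bar>x (K + int p)\<bar> * \<rho>^p)"
    and "summable (\<lambda>p. \<bar>x (K + int p)\<bar> * \<rho>^p) \<Longrightarrow>
           (\<Sum>\<^sub>\<infinity>n. x n * \<rho> powi n) = \<rho> powi K * (\<Sum>p. x (K + int p) * \<rho>^p)"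
    and "summable (\<lambda>p. \<bar>x (K + int p)\<bar> * \<rho>^p) \<Longrightarrow>
           (\<Sum>\<^sub>\<infinity>n. \<bar>x n\<bar> * \<rho> powi n) = \<rho> powi K * (\<Sum>p. \<bar>x (K + int p)\<bar> * \<rho>^p)"
proof -
  have pw: "\<rho> powi (K + int p) = \<rho> powi K * \<rho>^p" for p
    using r by (simp add: power_int_add)
  have pk: "\<rho> powi K > 0" using r by simp
  have za: "\<forall>n<K. \<bar>x n\<bar> * \<rho> powi n = 0" using z by simp
  have zb: "\<forall>n<K. x n * \<rho> powi n = 0" using z by simp
  have A: "(\<lambda>n. \<bar>x n\<bar> * \<rho> powi n) summable_on UNIV \<longleftrightarrow> summable (\<lambda>p. \<bar>\<bar>x (K + int p)\<bar> * \<rho> powi (K + int p)\<bar>)"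
    by (rule int_nat_core(1)[OF za])
  have B: "(\<lambda>p. \<bar>\<bar>x (K + int p)\<bar> * \<rho> powi (K + int p)\<bar>) = (\<lambda>p. \<rho> powi K * (\<bar>x (K + int p)\<bar> * \<rho>^p))"
    using r by (simp add: pw abs_mult mult_ac)
  show "(\<lambda>n. \<bar>x n\<bar> * \<rho> powi n) summable_on UNIV \<longleftrightarrow> summable (\<lambda>p. \<bar>x (K + int p)\<bar> * \<rho>^p)"
    using A B pk r by simp
  assume s: "summable (\<lambda>p. \<bar>x (K + int p)\<bar> * \<rho>^p)"
  have s1: "summable (\<lambda>p. \<bar>\<bar>x (K + int p)\<bar> * \<rho> powi (K + int p)\<bar>)" using B s by simp
  have s2: "summable (\<lambda>p. \<bar>x (K + int p) * \<rho> powi (K + int p)\<bar>)" using s1 by (simp add: abs_mult)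
  have "(\<Sum>\<^sub>\<infinity>n. x n * \<rho> powi n) = (\<Sum>p. x (K + int p) * \<rho> powi (K + int p))"
    by (rule int_nat_core(2)[OF zb s2])
  also have "\<dots> = (\<Sum>p. \<rho> powi K * (x (K + int p) * \<rho>^p))" by (simp add: pw mult_ac)
  also have "\<dots> = \<rho> powi K * (\<Sum>p. x (K + int p) * \<rho>^p)"
    by (rule suminf_mult) (rule summable_rabs_cancel, use s r in \<open>simp add: abs_mult\<close>)
  finally show "(\<Sum>\<^sub>\<infinity>n. x n * \<rho> powi n) = \<rho> powi K * (\<Sum>p. x (K + int p) * \<rho>^p)" .
  have "(\<Sum>\<^sub>\<infinity>n. \<bar>x n\<bar> * \<rho> powi n) = (\<Sum>p. \<bar>x (K + int p)\<bar> * \<rho> powi (K + int p))"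
    by (rule int_nat_core(2)[OF za s1])
  also have "\<dots> = (\<Sum>p. \<rho> powi K * (\<bar>x (K + int p)\<bar> * \<rho>^p))" by (simp add: pw mult_ac)
  also have "\<dots> = \<rho> powi K * (\<Sum>p. \<bar>x (K + int p)\<bar> * \<rho>^p)"
    by (rule suminf_mult) (use s in auto)
  finally show "(\<Sum>\<^sub>\<infinity>n. \<bar>x n\<bar> * \<rho> powi n) = \<rho> powi K * (\<Sum>p. \<bar>x (K + int p)\<bar> * \<rho>^p)" .
qed




lemma summable_n_pow:
  fixes \<rho> :: real assumes "0 \<le> \<rho>" "\<rho> < 1"
  shows "summable (\<lambda>k. real k * \<rho>^k)"
proof (cases "\<rho> = 0")
  case True
  then show ?thesis by (intro summable_finite[of "{0}"]) auto
next
  case False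
  then have r: "0 < \<rho>" using assms by simp
  define c where "c = (1 + \<rho>) / 2"
  have c: "c < 1" "\<rho> < c" using assms by (auto simp: c_def)
  obtain N :: nat where N: "real N \<ge> \<rho> / (c - \<rho>)" using real_arch_simple by blast
  show ?thesis
  proof (rule summable_ratio_test[OF c(1), of N])
    fix n assume n: "N \<le> n"
    have "\<rho> / (c - \<rho>) \<le> real n" using N n by linarith
    then have "\<rho> \<le> real n * (c - \<rho>)" using c by (simp add: field_simps)
    then have "real (Suc n) * \<rho> \<le> c * real n" by (simp add: algebra_simps)
    then have "real (Suc n) * \<rho> * \<rho>^n \<le> c * real n * \<rho>^n" using r by (intro mult_right_mono) auto
    then show "norm (real (Suc n) * \<rho> ^ Suc n) \<le> c * norm (real n * \<rho> ^ n)"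
      using r c by (simp add: abs_mult mult_ac)
  qed
qed

lemma rec_bound:
  fixes V e :: "nat \<Rightarrow> real" and \<rho> :: real
  assumes e: "\<And>k. \<bar>e k\<bar> \<le> 1"
    and rec: "\<And>m. m \<ge> 1 \<Longrightarrow> real m * V m = (\<Sum>k=1..m. real k * e k * V (m - k))"
    and r: "0 < \<rho>" "\<rho> < 1"
  shows "\<exists>C. \<forall>n. \<bar>V n\<bar> * \<rho>^n \<le> C"
proof -
  define S where "S = (\<Sum>k. real k * \<rho>^k)"
  have sS: "summable (\<lambda>k. real k * \<rho>^k)" using summable_n_pow r by auto
  obtain N0 :: nat where N0: "real N0 \<ge> S" using real_arch_simple by blast
  define C where "C = (\<Sum>n\<le>N0. \<bar>V n\<bar> * \<rho>^n)"
  have C0: "C \<ge> 0" unfolding C_def using r by (intro sum_nonneg) auto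
  have part: "(\<Sum>k=1..n. real k * \<rho>^k) \<le> S" for n
    unfolding S_def by (rule sum_le_suminf[OF sS]) (use r in auto)
  have "\<bar>V n\<bar> * \<rho>^n \<le> C" for n
  proof (induction n rule: less_induct)
    case (less n)
    show ?case
    proof (cases "n \<le> N0")
      case True
      then show ?thesis unfolding C_def
        by (intro member_le_sum) (use r in auto)
    next
      case False
      then have n1: "n \<ge> 1" and nS: "real n \<ge> S" using N0 by auto
      have "real n * (\<bar>V n\<bar> * \<rho>^n) = \<bar>real n * V n\<bar> * \<rho>^n" by (simp add: abs_mult)
      also have "\<dots> = \<bar>\<Sum>k=1..n. real k * e k * V (n - k)\<bar> * \<rho>^n" using rec[OF n1] by simp
      also have "\<dots> \<le> (\<Sum>k=1..n. \<bar>real k * e k * V (n - k)\<bar>) * \<rho>^n"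
        using r by (intro mult_right_mono sum_abs) auto
      also have "\<dots> = (\<Sum>k=1..n. \<bar>real k * e k * V (n - k)\<bar> * \<rho>^n)"
        by (simp add: sum_distrib_right)
      also have "\<dots> \<le> (\<Sum>k=1..n. (real k * \<rho>^k) * C)"
      proof (rule sum_mono)
        fix k assume k: "k \<in> {1..n}"
        have IH: "\<bar>V (n - k)\<bar> * \<rho>^(n - k) \<le> C" using less k by auto
        have pw: "\<rho>^n = \<rho>^k * \<rho>^(n-k)" using k by (simp add: power_add[symmetric])
        have "\<bar>real k * e k * V (n - k)\<bar> * \<rho>^n = (real k * \<rho>^k) * (\<bar>e k\<bar> * (\<bar>V (n - k)\<bar> * \<rho>^(n - k)))"
          by (simp add: abs_mult pw mult_ac)
        also have "\<dots> \<le> (real k * \<rho>^k) * (1 * C)"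
          using r e[of k] IH C0 by (intro mult_left_mono mult_mono) auto
        finally show "\<bar>real k * e k * V (n - k)\<bar> * \<rho>^n \<le> (real k * \<rho>^k) * C" by simp
      qed
      also have "\<dots> = (\<Sum>k=1..n. real k * \<rho>^k) * C" by (simp add: sum_distrib_right)
      also have "\<dots> \<le> S * C" using part C0 by (intro mult_right_mono) auto
      also have "\<dots> \<le> real n * C" using nS C0 by (intro mult_right_mono) auto
      finally have "real n * (\<bar>V n\<bar> * \<rho>^n) \<le> real n * C" .
      then show ?thesis using n1 by simp
    qed
  qed
  then show ?thesis by blast
qed

lemma bound_summable:
  fixes V :: "nat \<Rightarrow> real"
  assumes "\<forall>n. \<bar>V n\<bar> * \<rho>^n \<le> C" "0 \<le> r" "r < \<rho>"
  shows "summable (\<lambda>n. \<bar>V n\<bar> * r^n)"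
proof (rule summable_comparison_test'[of "\<lambda>n. C * (r/\<rho>)^n" 0])
  have r: "\<rho> > 0" using assms by auto
  show "summable (\<lambda>n. C * (r / \<rho>) ^ n)" using assms r by (intro summable_mult summable_geometric) auto
  fix n :: nat
  have "\<bar>V n\<bar> * r^n = (\<bar>V n\<bar> * \<rho>^n) * (r/\<rho>)^n" using r by (simp add: power_divide)
  also have "\<dots> \<le> C * (r/\<rho>)^n" using assms(1) assms r by (intro mult_right_mono) auto
  finally show "norm (\<bar>V n\<bar> * r ^ n) \<le> C * (r / \<rho>) ^ n" using assms by (simp add: abs_mult)
qed




fun QU :: "real \<Rightarrow> nat \<Rightarrow> (nat \<Rightarrow> real) \<times> (nat \<Rightarrow> real)" where
  "QU b 0 = ((\<lambda>_. 0), (\<lambda>k. if k = 0 then 1 else 0))"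
| "QU b (Suc n) = (let q = fst (QU b n); u = snd (QU b n);
      P = (\<Sum>k=1..n. real k * q k * u (Suc n - k)) / real (Suc n);
      y = b * u n - P;
      qn = y - of_int \<lfloor>y\<rfloor>
   in (q(Suc n := qn), u(Suc n := qn + P)))"

definition qq :: "real \<Rightarrow> nat \<Rightarrow> real" where "qq b n = fst (QU b n) n"
definition uu :: "real \<Rightarrow> nat \<Rightarrow> real" where "uu b n = snd (QU b n) n"

lemma QU_stab: "j \<le> n \<Longrightarrow> fst (QU b n) j = qq b j \<and> snd (QU b n) j = uu b j"
proof (induction n)
  case 0 then show ?case by (simp add: qq_def uu_def)
next
  case (Suc n)
  show ?case
  proof (cases "j = Suc n")
    case True then show ?thesis by (simp add: qq_def uu_def)
  next
    case False
    then have "j \<le> n" using Suc.prems by simp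
    with Suc.IH False show ?thesis by (simp add: Let_def)
  qed
qed

lemma uu_0: "uu b 0 = 1" and qq_0: "qq b 0 = 0"
  by (simp_all add: uu_def qq_def)

definition PP :: "real \<Rightarrow> nat \<Rightarrow> real" where
  "PP b n = (\<Sum>k=1..n. real k * qq b k * uu b (Suc n - k)) / real (Suc n)"

lemma PP_eq: "(\<Sum>k=1..n. real k * fst (QU b n) k * snd (QU b n) (Suc n - k)) / real (Suc n) = PP b n"
proof -
  have "(\<Sum>k=1..n. real k * fst (QU b n) k * snd (QU b n) (Suc n - k)) = (\<Sum>k=1..n. real k * qq b k * uu b (Suc n - k))"
  proof (rule sum.cong[OF refl])
    fix k assume k: "k \<in> {1..n}"
    then have "fst (QU b n) k = qq b k" "snd (QU b n) (Suc n - k) = uu b (Suc n - k)"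
      using QU_stab[of k n b] QU_stab[of "Suc n - k" n b] by auto
    then show "real k * fst (QU b n) k * snd (QU b n) (Suc n - k) = real k * qq b k * uu b (Suc n - k)" by simp
  qed
  then show ?thesis unfolding PP_def by simp
qed

lemma shift1: "(\<Sum>k=1..Suc n. f k) = (\<Sum>i=0..n. f (Suc i))"
  using sum.shift_bounds_cl_Suc_ivl[of f 0 n] by simp

lemma qq_Suc: "qq b (Suc n) = (b * uu b n - PP b n) - of_int \<lfloor>b * uu b n - PP b n\<rfloor>"
proof -
  have s: "snd (QU b n) n = uu b n" using QU_stab[of n n b] by auto
  have "qq b (Suc n) = (b * snd (QU b n) n - (\<Sum>k=1..n. real k * fst (QU b n) k * snd (QU b n) (Suc n - k)) / real (Suc n))
     - of_int \<lfloor>b * snd (QU b n) n - (\<Sum>k=1..n. real k * fst (QU b n) k * snd (QU b n) (Suc n - k)) / real (Suc n)\<rfloor>"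
    by (simp only: qq_def QU.simps Let_def fst_conv fun_upd_same)
  then show ?thesis by (simp only: PP_eq s)
qed

lemma uu_Suc: "uu b (Suc n) = qq b (Suc n) + PP b n"
proof -
  have s: "snd (QU b n) n = uu b n" using QU_stab[of n n b] by auto
  have "uu b (Suc n) = (b * snd (QU b n) n - (\<Sum>k=1..n. real k * fst (QU b n) k * snd (QU b n) (Suc n - k)) / real (Suc n))
     - of_int \<lfloor>b * snd (QU b n) n - (\<Sum>k=1..n. real k * fst (QU b n) k * snd (QU b n) (Suc n - k)) / real (Suc n)\<rfloor>
     + (\<Sum>k=1..n. real k * fst (QU b n) k * snd (QU b n) (Suc n - k)) / real (Suc n)"
    by (simp only: uu_def QU.simps Let_def snd_conv fun_upd_same)
  then show ?thesis by (simp only: PP_eq s qq_Suc)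
qed

lemma qq_bound: "\<bar>qq b k\<bar> \<le> 1"
proof (cases k)
  case 0 then show ?thesis by (simp add: qq_0)
next
  case (Suc n)
  have "0 \<le> qq b (Suc n)" "qq b (Suc n) < 1" unfolding qq_Suc by linarith+
  then show ?thesis using Suc by simp
qed

lemma uu_int: "uu b (Suc n) - b * uu b n = - of_int \<lfloor>b * uu b n - PP b n\<rfloor>"
  by (simp add: uu_Suc qq_Suc)

lemma uu_rec: "m \<ge> 1 \<Longrightarrow> real m * uu b m = (\<Sum>k=1..m. real k * qq b k * uu b (m - k))"
proof -
  assume "m \<ge> 1"
  then obtain n where m: "m = Suc n" by (cases m) auto
  have "(\<Sum>k=1..Suc n. real k * qq b k * uu b (Suc n - k))
      = (\<Sum>k=1..n. real k * qq b k * uu b (Suc n - k)) + real (Suc n) * qq b (Suc n)"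
    by (simp add: uu_0)
  also have "\<dots> = real (Suc n) * PP b n + real (Suc n) * qq b (Suc n)"
    unfolding PP_def by simp
  also have "\<dots> = real (Suc n) * uu b (Suc n)" by (simp add: uu_Suc algebra_simps)
  finally show ?thesis using m by simp
qed

definition Qf :: "real \<Rightarrow> real fps" where "Qf b = Abs_fps (qq b)"
definition Uf :: "real \<Rightarrow> real fps" where "Uf b = Abs_fps (uu b)"
definition Wf :: "real \<Rightarrow> real fps" where "Wf b = inverse (Uf b)"

lemma Uf_0: "Uf b $ 0 = 1" by (simp add: Uf_def uu_0)

lemma Uf_deriv: "fps_deriv (Uf b) = fps_deriv (Qf b) * Uf b"
proof (rule fps_ext)
  fix n
  have "fps_deriv (Uf b) $ n = real (Suc n) * uu b (Suc n)" by (simp add: Uf_def)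
  also have "\<dots> = (\<Sum>k=1..Suc n. real k * qq b k * uu b (Suc n - k))" by (rule uu_rec) simp
  also have "\<dots> = (\<Sum>i=0..n. real (Suc i) * qq b (Suc i) * uu b (n - i))"
    unfolding shift1 by simp
  also have "\<dots> = (fps_deriv (Qf b) * Uf b) $ n"
    by (simp add: fps_mult_nth Qf_def Uf_def)
  finally show "fps_deriv (Uf b) $ n = (fps_deriv (Qf b) * Uf b) $ n" .
qed

lemma UW: "Uf b * Wf b = 1"
  unfolding Wf_def by (rule inverse_mult_eq_1') (simp add: Uf_0)

lemma Wf_deriv: "fps_deriv (Wf b) = - fps_deriv (Qf b) * Wf b"
proof -
  have "fps_deriv (Wf b) = - fps_deriv (Uf b) * (Wf b)\<^sup>2"
    unfolding Wf_def by (rule fps_inverse_deriv) (simp add: Uf_0)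
  also have "\<dots> = - fps_deriv (Qf b) * (Uf b * Wf b) * Wf b"
    by (simp add: Uf_deriv power2_eq_square mult_ac)
  finally show ?thesis by (simp add: UW)
qed

lemma Wf_rec: "m \<ge> 1 \<Longrightarrow> real m * (Wf b $ m) = (\<Sum>k=1..m. real k * (- qq b k) * (Wf b $ (m - k)))"
proof -
  assume "m \<ge> 1"
  then obtain n where m: "m = Suc n" by (cases m) auto
  have "real (Suc n) * (Wf b $ Suc n) = fps_deriv (Wf b) $ n" by simp
  also have "\<dots> = (- fps_deriv (Qf b) * Wf b) $ n" by (simp only: Wf_deriv)
  also have "\<dots> = (\<Sum>i=0..n. real (Suc i) * (- qq b (Suc i)) * (Wf b $ (n - i)))"
    by (simp add: fps_mult_nth Qf_def sum_negf)
  also have "\<dots> = (\<Sum>k=1..Suc n. real k * (- qq b k) * (Wf b $ (Suc n - k)))"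
    unfolding shift1 by simp
  finally show ?thesis using m by simp
qed

lemma Uf_bound: "0 < \<rho> \<Longrightarrow> \<rho> < 1 \<Longrightarrow> \<exists>C. \<forall>n. \<bar>Uf b $ n\<bar> * \<rho>^n \<le> C"
  using rec_bound[of "qq b" "\<lambda>n. Uf b $ n" \<rho>] qq_bound uu_rec by (simp add: Uf_def)

lemma Wf_bound: "0 < \<rho> \<Longrightarrow> \<rho> < 1 \<Longrightarrow> \<exists>C. \<forall>n. \<bar>Wf b $ n\<bar> * \<rho>^n \<le> C"
  using rec_bound[of "\<lambda>k. - qq b k" "\<lambda>n. Wf b $ n" \<rho>] qq_bound Wf_rec by simp




definition Lf :: "real \<Rightarrow> real fps" where "Lf b = 1 - fps_const b * fps_X"
definition Gf :: "real \<Rightarrow> real fps" where "Gf b = Lf b * Uf b"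
definition Geo :: "real \<Rightarrow> real fps" where "Geo b = Abs_fps (\<lambda>n. b^n)"
definition Cf :: "real \<Rightarrow> real fps" where "Cf b = Wf b * Geo b"

lemma Lf_nth: "Lf b $ n = (if n = 0 then 1 else if n = 1 then -b else 0)"
  by (simp add: Lf_def fps_X_mult_nth)

lemma Gf_0: "Gf b $ 0 = 1"
  by (simp add: Gf_def Lf_def Uf_0)

lemma Gf_Suc: "Gf b $ Suc n = uu b (Suc n) - b * uu b n"
  by (simp add: Gf_def Lf_def algebra_simps fps_X_mult_nth Uf_def)

lemma Gf_int: "Gf b $ n \<in> \<int>"
proof (cases n)
  case 0 then show ?thesis by (simp add: Gf_0)
next
  case (Suc m) then show ?thesis by (simp add: Gf_Suc uu_int)
qed

lemma LGeo: "Lf b * Geo b = 1"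
proof (rule fps_ext)
  fix n show "(Lf b * Geo b) $ n = (1 :: real fps) $ n"
    by (cases n) (simp_all add: Lf_def Geo_def algebra_simps fps_X_mult_nth)
qed

lemma GC: "Gf b * Cf b = 1"
proof -
  have "Gf b * Cf b = (Lf b * Geo b) * (Uf b * Wf b)" by (simp add: Gf_def Cf_def mult_ac)
  then show ?thesis by (simp add: LGeo UW)
qed

lemma Cf_int: "Cf b $ n \<in> \<int>"
proof (induction n rule: less_induct)
  case (less n)
  have e: "(Gf b * Cf b) $ n = (if n = 0 then 1 else 0)" by (simp add: GC)
  show ?case
  proof (cases n)
    case 0
    then show ?thesis using e by (simp add: fps_mult_nth Gf_0)
  next
    case (Suc m)
    have "(Gf b * Cf b) $ n = Gf b $ 0 * Cf b $ n + (\<Sum>i=Suc 0..n. Gf b $ i * Cf b $ (n - i))"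
      unfolding fps_mult_nth by (subst sum.atLeast_Suc_atMost) auto
    then have "Cf b $ n = - (\<Sum>i=Suc 0..n. Gf b $ i * Cf b $ (n - i))" using e Suc by (simp add: Gf_0)
    also have "\<dots> \<in> \<int>"
      by (intro Ints_minus Ints_sum Ints_mult Gf_int less) (use Suc in auto)
    finally show ?thesis .
  qed
qed

lemma sum_bounded_fps:
  fixes F :: "real fps" and r :: real
  assumes "\<And>\<rho>. 0 < \<rho> \<Longrightarrow> \<rho> < 1 \<Longrightarrow> \<exists>C. \<forall>n. \<bar>F $ n\<bar> * \<rho>^n \<le> C" "0 \<le> r" "r < 1"
  shows "summable (\<lambda>n. \<bar>F $ n\<bar> * r^n)"
proof -
  define \<rho> where "\<rho> = (1 + r) / 2"
  have "0 < \<rho>" "\<rho> < 1" "r < \<rho>" using assms by (auto simp: \<rho>_def)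
  then obtain C where "\<forall>n. \<bar>F $ n\<bar> * \<rho>^n \<le> C" using assms(1) by blast
  then show ?thesis using bound_summable[of "\<lambda>n. F $ n" \<rho> C r] \<open>r < \<rho>\<close> assms by auto
qed

lemma sU: "0 \<le> r \<Longrightarrow> r < 1 \<Longrightarrow> summable (\<lambda>n. \<bar>Uf b $ n\<bar> * r^n)"
  by (rule sum_bounded_fps) (use Uf_bound in auto)

lemma sW: "0 \<le> r \<Longrightarrow> r < 1 \<Longrightarrow> summable (\<lambda>n. \<bar>Wf b $ n\<bar> * r^n)"
  by (rule sum_bounded_fps) (use Wf_bound in auto)

lemma sL: "summable (\<lambda>n. \<bar>Lf b $ n\<bar> * r^n)"
  by (rule summable_finite[of "{0,1}"]) (auto simp: Lf_nth)

lemma sG: "0 \<le> r \<Longrightarrow> r < 1 \<Longrightarrow> summable (\<lambda>n. \<bar>Gf b $ n\<bar> * r^n)"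
  unfolding Gf_def by (rule fps_cauchy(1)[OF _ sL sU]) auto

lemma theta_G:
  assumes "0 < r'" "r' < 1"
  shows "(\<Sum>n. Gf (1/r') $ n * r'^n) = 0"
proof -
  have "(\<Sum>n. Gf (1/r') $ n * r'^n) = (\<Sum>n. Lf (1/r') $ n * r'^n) * (\<Sum>n. Uf (1/r') $ n * r'^n)"
    unfolding Gf_def by (rule fps_cauchy(3)[OF _ sL sU]) (use assms in auto)
  also have "(\<Sum>n. Lf (1/r') $ n * r'^n) = (\<Sum>n\<in>{0,1}. Lf (1/r') $ n * r'^n)"
    by (rule suminf_finite) (auto simp: Lf_nth)
  also have "\<dots> = 0" using assms by (simp add: Lf_nth)
  finally show ?thesis by simp
qed

lemma Geo_mult_nth: "(A * Geo b) $ m = (\<Sum>i=0..m. A $ i * b^(m - i))"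
  by (simp add: fps_mult_nth Geo_def)

lemma geo_partial: 
  fixes t :: real assumes "0 \<le> t" "t < 1"
  shows "(\<Sum>m<i. t^(i - m)) \<le> t / (1 - t)"
proof -
  have "(\<Sum>m<i. t^(i - m)) = (\<Sum>d<i. t^(Suc d))"
    by (rule sum.reindex_bij_witness[of _ "\<lambda>d. i - Suc d" "\<lambda>m. i - Suc m"]) (auto simp flip: power_Suc simp: Suc_diff_Suc)
  also have "\<dots> = t * (\<Sum>d<i. t^d)" by (simp add: sum_distrib_left)
  also have "\<dots> = t * ((1 - t^i) / (1 - t))" using assms by (simp add: sum_gp_strict)
  also have "\<dots> \<le> t * (1 / (1 - t))" using assms
    by (intro mult_left_mono divide_right_mono) auto
  finally show ?thesis by simp
qed




lemma tail_bound:
  fixes A :: "real fps" and r r' :: real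
  assumes r: "0 < r'" "r' < r"
    and sA: "summable (\<lambda>n. \<bar>A$n\<bar> * r^n)"
    and z: "(\<Sum>n. A$n * r'^n) = 0"
  shows "summable (\<lambda>n. \<bar>(A * Geo (1/r'))$n\<bar> * r^n)"
    and "(\<Sum>n. \<bar>(A * Geo (1/r'))$n\<bar> * r^n) \<le> r'/(r - r') * (\<Sum>n. \<bar>A$n\<bar> * r^n)"
proof -
  define b where "b = 1 / r'"
  define t where "t = r' / r"
  define p where "p = (\<lambda>i. \<bar>A$i\<bar> * r^i)"
  have t: "0 < t" "t < 1" using r by (auto simp: t_def)
  have bpos: "b > 0" using r by (simp add: b_def)
  have br: "b * r' = 1" using r by (simp add: b_def)
  have p0: "p i \<ge> 0" for i using r by (simp add: p_def)
  have sp: "summable p" using sA by (simp add: p_def)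
  have sA1: "summable (\<lambda>n. \<bar>A$n * r'^n\<bar>)"
  proof (rule summable_comparison_test'[OF sA, of 0])
    fix n :: nat
    have "r'^n \<le> r^n" using r by (intro power_mono) auto
    then show "norm \<bar>A$n * r'^n\<bar> \<le> \<bar>A$n\<bar> * r^n" using r by (simp add: abs_mult mult_left_mono)
  qed
  have sA2: "summable (\<lambda>n. A$n * r'^n)" by (rule summable_rabs_cancel[OF sA1])
  define f where "f m i = (if m < i then p i * t^(i - m) else 0)" for m i :: nat
  have f0: "0 \<le> f m i" for m i using p0 t by (simp add: f_def)
  have fle: "f m i \<le> p i" for m i
  proof -
    have "t^(i - m) \<le> 1" using t by (intro power_le_one) auto
    then show ?thesis using p0[of i] by (auto simp: f_def intro: mult_left_le)
  qed
  have sf: "summable (f m)" for m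
    by (rule summable_comparison_test'[OF sp, of 0]) (use f0 fle in auto)
  have Vbound: "\<bar>(A * Geo b)$m\<bar> * r^m \<le> (\<Sum>i. f m i)" for m
  proof -
    have split: "(\<Sum>n. A$n * r'^n) = (\<Sum>j. A$(j + Suc m) * r'^(j + Suc m)) + (\<Sum>i<Suc m. A$i * r'^i)"
      by (rule suminf_split_initial_segment[OF sA2])
    have pw: "b^(m - i) = b^m * r'^i" if "i \<le> m" for i
    proof -
      have "b^m * r'^i = b^(m-i) * (b^i * r'^i)" using that by (simp add: power_add[symmetric])
      also have "\<dots> = b^(m-i)" by (simp add: power_mult_distrib[symmetric] br)
      finally show ?thesis by simp
    qed
    have "(A * Geo b)$m = (\<Sum>i=0..m. A$i * b^(m - i))" by (rule Geo_mult_nth)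
    also have "\<dots> = b^m * (\<Sum>i<Suc m. A$i * r'^i)"
      by (simp add: sum_distrib_left atLeast0AtMost lessThan_Suc_atMost pw mult_ac)
    also have "\<dots> = - (b^m) * (\<Sum>j. A$(j + Suc m) * r'^(j + Suc m))"
    proof -
      have P: "(\<Sum>i<Suc m. A$i * r'^i) = - (\<Sum>j. A$(j + Suc m) * r'^(j + Suc m))"
        using split z by linarith
      show ?thesis by (simp only: P)
    qed
    finally have V: "(A * Geo b)$m = - (b^m) * (\<Sum>j. A$(j + Suc m) * r'^(j + Suc m))" .
    have sj: "summable (\<lambda>j. \<bar>A$(j + Suc m) * r'^(j + Suc m)\<bar>)"
      using summable_ignore_initial_segment[OF sA1, of "Suc m"] by simp
    have "\<bar>(A * Geo b)$m\<bar> * r^m = (b^m * r^m) * \<bar>\<Sum>j. A$(j + Suc m) * r'^(j + Suc m)\<bar>"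
      using r bpos by (simp add: V abs_mult)
    also have "\<dots> \<le> (b^m * r^m) * (\<Sum>j. \<bar>A$(j + Suc m) * r'^(j + Suc m)\<bar>)"
      using r bpos by (intro mult_left_mono summable_rabs sj) auto
    also have "\<dots> = (\<Sum>j. (b^m * r^m) * \<bar>A$(j + Suc m) * r'^(j + Suc m)\<bar>)"
      by (rule suminf_mult[OF sj, symmetric])
    also have "\<dots> = (\<Sum>j. f m (j + Suc m))"
    proof (rule suminf_cong)
      fix j
      have "(b^m * r^m) * r'^(j + Suc m) = r^(j + Suc m) * t^(Suc j)"
      proof -
        have "(b^m * r^m) * r'^(j + Suc m) = r^m * r'^(Suc j) * (b * r')^m"
          by (simp add: power_add power_mult_distrib mult_ac)
        also have "\<dots> = r^m * r'^(Suc j)" by (simp add: br)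
        also have "\<dots> = r^(j + Suc m) * t^(Suc j)"
          using r by (simp add: t_def power_divide power_add)
        finally show ?thesis .
      qed
      then show "(b^m * r^m) * \<bar>A$(j + Suc m) * r'^(j + Suc m)\<bar> = f m (j + Suc m)"
        using r by (simp add: f_def p_def abs_mult mult_ac)
    qed
    also have "\<dots> = (\<Sum>i. f m i)"
    proof -
      have "(\<Sum>i. f m i) = (\<Sum>j. f m (j + Suc m)) + (\<Sum>i<Suc m. f m i)"
        by (rule suminf_split_initial_segment[OF sf])
      moreover have "(\<Sum>i<Suc m. f m i) = 0" by (simp add: f_def)
      ultimately show ?thesis by simp
    qed
    finally show ?thesis .
  qed
  have part: "(\<Sum>m<M. \<bar>(A * Geo b)$m\<bar> * r^m) \<le> r'/(r - r') * (\<Sum>n. \<bar>A$n\<bar> * r^n)" for M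
  proof -
    have "(\<Sum>m<M. \<bar>(A * Geo b)$m\<bar> * r^m) \<le> (\<Sum>m<M. \<Sum>i. f m i)"
      by (intro sum_mono Vbound)
    also have "\<dots> = (\<Sum>i. \<Sum>m<M. f m i)"
      by (rule suminf_sum[symmetric]) (use sf in auto)
    also have "\<dots> \<le> (\<Sum>i. p i * (t / (1 - t)))"
    proof (rule suminf_le)
      fix i
      have "(\<Sum>m<M. f m i) = (\<Sum>m\<in>{..<M} \<inter> {..<i}. p i * t^(i - m))"
        unfolding f_def by (simp add: sum.inter_restrict)
      also have "\<dots> \<le> (\<Sum>m<i. p i * t^(i - m))"
        by (rule sum_mono2) (use p0 t in auto)
      also have "\<dots> = p i * (\<Sum>m<i. t^(i - m))" by (simp add: sum_distrib_left)
      also have "\<dots> \<le> p i * (t / (1 - t))"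
        by (intro mult_left_mono geo_partial) (use t p0 in auto)
      finally show "(\<Sum>m<M. f m i) \<le> p i * (t / (1 - t))" .
    next
      show "summable (\<lambda>i. \<Sum>m<M. f m i)" by (intro summable_sum sf)
      show "summable (\<lambda>i. p i * (t / (1 - t)))" by (intro summable_mult2 sp)
    qed
    also have "\<dots> = (t / (1 - t)) * (\<Sum>n. \<bar>A$n\<bar> * r^n)"
      using suminf_mult2[OF sp, of "t / (1 - t)"] by (simp add: p_def mult_ac)
    also have "t / (1 - t) = r'/(r - r')"
      using r by (simp add: t_def field_simps)
    finally show ?thesis .
  qed
  show S: "summable (\<lambda>n. \<bar>(A * Geo (1/r'))$n\<bar> * r^n)"
    by (rule summableI_nonneg_bounded[of _ "r'/(r - r') * (\<Sum>n. \<bar>A$n\<bar> * r^n)"])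
       (use part r in \<open>auto simp: b_def\<close>)
  show "(\<Sum>n. \<bar>(A * Geo (1/r'))$n\<bar> * r^n) \<le> r'/(r - r') * (\<Sum>n. \<bar>A$n\<bar> * r^n)"
    by (rule suminf_le_const[OF S]) (use part in \<open>auto simp: b_def\<close>)
qed




lemma LM_fin:
  assumes "\<forall>n<Ka. \<forall>s. a n s = 0" "\<forall>n<Kb. \<forall>s. b n s = 0"
  shows "ls_mult a b n s = (\<Sum>i\<in>{Ka..n-Kb}. a i s * b (n-i) s)"
  unfolding ls_mult_def
proof (rule sum.mono_neutral_left)
  show "finite {Ka..n-Kb}" by simp
  show "{i. a i s \<noteq> 0 \<and> b (n - i) s \<noteq> 0} \<subseteq> {Ka..n - Kb}"
  proof
    fix i assume i: "i \<in> {i. a i s \<noteq> 0 \<and> b (n - i) s \<noteq> 0}"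
    then have "\<not> i < Ka" "\<not> n - i < Kb" using assms by auto
    then show "i \<in> {Ka..n - Kb}" by auto
  qed
  show "\<forall>i\<in>{Ka..n - Kb} - {i. a i s \<noteq> 0 \<and> b (n - i) s \<noteq> 0}. a i s * b (n - i) s = 0" by auto
qed

lemma LM_lb:
  assumes "\<forall>n<Ka. \<forall>s. a n s = 0" "\<forall>n<Kb. \<forall>s. b n s = 0"
  shows "\<forall>n<Ka+Kb. \<forall>s. ls_mult a b n s = 0"
  using LM_fin[OF assms] by auto

definition shf :: "(int \<Rightarrow> 'a \<Rightarrow> int) \<Rightarrow> int \<Rightarrow> 'a \<Rightarrow> real fps" where
  "shf a K s = Abs_fps (\<lambda>p. real_of_int (a (K + int p) s))"

lemma shf_nth: "shf a K s $ p = real_of_int (a (K + int p) s)"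
  by (simp add: shf_def)

lemma LM_shift:
  assumes "\<forall>n<Ka. \<forall>s. a n s = 0" "\<forall>n<Kb. \<forall>s. b n s = 0"
  shows "real_of_int (ls_mult a b (Ka + Kb + int p) s) = (shf a Ka s * shf b Kb s) $ p"
proof -
  have e1: "ls_mult a b (Ka + Kb + int p) s = (\<Sum>i\<in>{Ka..Ka + Kb + int p - Kb}. a i s * b (Ka + Kb + int p - i) s)"
    by (rule LM_fin[OF assms])
  have e2: "Ka + Kb + int p - Kb = Ka + int p" by simp
  have e3: "(\<Sum>j=0..p. a (Ka + int j) s * b (Kb + int (p - j)) s) = (\<Sum>i\<in>{Ka..Ka + int p}. a i s * b (Ka + Kb + int p - i) s)"
  proof (rule sum.reindex_bij_witness[of _ "\<lambda>i. nat (i - Ka)" "\<lambda>j. Ka + int j"])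
    fix j assume j: "j \<in> {0..p}"
    then have "int (p - j) = int p - int j" by (simp add: of_nat_diff)
    then have "Kb + int (p - j) = Ka + Kb + int p - (Ka + int j)" by simp
    then show "a (Ka + int j) s * b (Ka + Kb + int p - (Ka + int j)) s = a (Ka + int j) s * b (Kb + int (p - j)) s"
      by simp
  next
    fix j assume j: "j \<in> {0..p}"
    show "nat (Ka + int j - Ka) = j" by simp
    show "Ka + int j \<in> {Ka..Ka + int p}" using j by simp
  next
    fix i assume i: "i \<in> {Ka..Ka + int p}"
    show "Ka + int (nat (i - Ka)) = i" using i by simp
    have "i - Ka \<le> int p" using i by simp
    then have "nat (i - Ka) \<le> nat (int p)" by (rule nat_mono)
    then show "nat (i - Ka) \<in> {0..p}" by simp
  qed
  have "real_of_int (ls_mult a b (Ka + Kb + int p) s) = real_of_int (\<Sum>j=0..p. a (Ka + int j) s * b (Kb + int (p - j)) s)"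
    using e1 e2 e3 by simp
  also have "\<dots> = (shf a Ka s * shf b Kb s) $ p" by (simp add: fps_mult_nth shf_nth)
  finally show ?thesis .
qed

lemma LM_shift':
  assumes "\<forall>n<Ka. \<forall>s. a n s = 0" "\<forall>n<Kb. \<forall>s. b n s = 0" "n \<ge> Ka + Kb"
  shows "real_of_int (ls_mult a b n s) = (shf a Ka s * shf b Kb s) $ nat (n - (Ka + Kb))"
  using LM_shift[OF assms(1,2), of "nat (n - (Ka + Kb))" s] assms(3) by simp

lemma LM_lcst:
  assumes "\<forall>n<Ka. \<forall>s. a n s = 0" "\<forall>n<Kb. \<forall>s. b n s = 0"
    and "\<And>n. lcst X (a n)" "\<And>n. lcst X (b n)"
  shows "lcst X (ls_mult a b n)"
proof -
  have m: "lcst X (\<lambda>s. a i s * b (n-i) s)" for i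
    by (rule lcst_op[OF assms(3) assms(4)])
  have "lcst X (\<lambda>s. \<Sum>i\<in>{Ka..n-Kb}. a i s * b (n-i) s)"
    by (rule lcst_sum) (simp_all add: m)
  moreover have "ls_mult a b n = (\<lambda>s. \<Sum>i\<in>{Ka..n-Kb}. a i s * b (n-i) s)"
    by (rule ext) (rule LM_fin[OF assms(1,2)])
  ultimately show ?thesis by simp
qed

lemma ZT_D:
  assumes "a \<in> ZT X r" "0 < r"
  obtains K c where "\<forall>n<K. \<forall>s. a n s = 0" "\<And>n. lcst X (a n)" "\<forall>n s. s \<notin> topspace X \<longrightarrow> a n s = 0"
    "\<And>s. s \<in> topspace X \<Longrightarrow> summable (\<lambda>p. \<bar>shf a K s $ p\<bar> * r^p)"
    "\<And>s. s \<in> topspace X \<Longrightarrow> r powi K * (\<Sum>p. \<bar>shf a K s $ p\<bar> * r^p) \<le> c"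
proof -
  from assms(1) obtain K c where K: "\<forall>n<K. \<forall>s. a n s = 0"
    and c: "\<forall>s\<in>topspace X. (\<lambda>n. real_of_int \<bar>a n s\<bar> * r powi n) summable_on UNIV \<and>
        (\<Sum>\<^sub>\<infinity>n. real_of_int \<bar>a n s\<bar> * r powi n) \<le> c"
    and cont: "\<forall>n. continuous_map X (discrete_topology UNIV) (a n)"
    and z: "\<forall>n s. s \<notin> topspace X \<longrightarrow> a n s = 0"
    unfolding ZT_def by blast
  show ?thesis
  proof (rule that[OF K _ z])
    fix n show "lcst X (a n)" using cont cont_imp_lcst by blast
  next
    fix s assume s: "s \<in> topspace X"
    have K': "\<forall>n<K. real_of_int (a n s) = 0" using K by simp
    have sm: "(\<lambda>n. \<bar>real_of_int (a n s)\<bar> * r powi n) summable_on UNIV" using c s by simp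
    show S: "summable (\<lambda>p. \<bar>shf a K s $ p\<bar> * r^p)"
      using int_nat_sum(1)[OF assms(2) K'] sm by (simp add: shf_nth)
    have "(\<Sum>\<^sub>\<infinity>n. \<bar>real_of_int (a n s)\<bar> * r powi n) = r powi K * (\<Sum>p. \<bar>real_of_int (a (K + int p) s)\<bar> * r^p)"
      using int_nat_sum(3)[OF assms(2) K'] S by (simp add: shf_nth)
    moreover have "(\<Sum>\<^sub>\<infinity>n. real_of_int \<bar>a n s\<bar> * r powi n) \<le> c" using c s by blast
    ultimately show "r powi K * (\<Sum>p. \<bar>shf a K s $ p\<bar> * r^p) \<le> c" by (simp add: shf_nth)
  qed
qed

lemma ZT_I:
  assumes "0 < r" "\<forall>n<K. \<forall>s. a n s = 0" "\<And>n. lcst X (a n)" "\<forall>n s. s \<notin> topspace X \<longrightarrow> a n s = 0"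
    "\<And>s. s \<in> topspace X \<Longrightarrow> summable (\<lambda>p. \<bar>shf a K s $ p\<bar> * r^p)"
    "\<And>s. s \<in> topspace X \<Longrightarrow> r powi K * (\<Sum>p. \<bar>shf a K s $ p\<bar> * r^p) \<le> c"
  shows "a \<in> ZT X r"
  unfolding ZT_def
proof (intro CollectI conjI)
  show "\<forall>n. continuous_map X (discrete_topology UNIV) (a n)" using assms(3) lcst_imp_cont by blast
  show "\<forall>n s. s \<notin> topspace X \<longrightarrow> a n s = 0" by fact
  show "\<exists>k. \<forall>n<k. \<forall>s. a n s = 0" using assms(2) by blast
  show "\<exists>c. \<forall>s\<in>topspace X. (\<lambda>n. real_of_int \<bar>a n s\<bar> * r powi n) summable_on UNIV \<and> (\<Sum>\<^sub>\<infinity>n. real_of_int \<bar>a n s\<bar> * r powi n) \<le> c"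
  proof (intro exI ballI conjI)
    fix s assume s: "s \<in> topspace X"
    have K': "\<forall>n<K. real_of_int (a n s) = 0" using assms(2) by simp
    have S: "summable (\<lambda>p. \<bar>real_of_int (a (K + int p) s)\<bar> * r^p)" using assms(5)[OF s] by (simp add: shf_nth)
    show "(\<lambda>n. real_of_int \<bar>a n s\<bar> * r powi n) summable_on UNIV"
      using int_nat_sum(1)[OF assms(1) K'] S by simp
    have "(\<Sum>\<^sub>\<infinity>n. \<bar>real_of_int (a n s)\<bar> * r powi n) = r powi K * (\<Sum>p. \<bar>real_of_int (a (K + int p) s)\<bar> * r^p)"
      using int_nat_sum(3)[OF assms(1) K'] S by simp
    then show "(\<Sum>\<^sub>\<infinity>n. real_of_int \<bar>a n s\<bar> * r powi n) \<le> c" using assms(6)[OF s] by (simp add: shf_nth)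
  qed
qed

lemma theta_shf:
  assumes "0 < r'" "\<forall>n<K. \<forall>s. a n s = 0" "summable (\<lambda>p. \<bar>shf a K s $ p\<bar> * r'^p)"
  shows "theta r' a s = r' powi K * (\<Sum>p. shf a K s $ p * r'^p)"
proof -
  have K': "\<forall>n<K. real_of_int (a n s) = 0" using assms(2) by simp
  show ?thesis unfolding theta_def
    using int_nat_sum(2)[OF assms(1) K'] assms(3) by (simp add: shf_nth)
qed

lemma summable_smaller:
  fixes F :: "real fps"
  assumes "summable (\<lambda>p. \<bar>F $ p\<bar> * r^p)" "0 \<le> r'" "r' \<le> r"
  shows "summable (\<lambda>p. \<bar>F $ p\<bar> * r'^p)"
proof (rule summable_comparison_test'[OF assms(1), of 0])
  fix n :: nat
  have "r'^n \<le> r^n" using assms by (intro power_mono) auto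
  then show "norm (\<bar>F $ n\<bar> * r'^n) \<le> \<bar>F $ n\<bar> * r^n" using assms by (simp add: abs_mult mult_left_mono)
qed




definition gen :: "'a topology \<Rightarrow> real \<Rightarrow> int \<Rightarrow> 'a \<Rightarrow> int" where
  "gen X r' n s = (if s \<in> topspace X \<and> 0 \<le> n then \<lfloor>Gf (1/r') $ nat n\<rfloor> else 0)"

definition cinv :: "'a topology \<Rightarrow> real \<Rightarrow> int \<Rightarrow> 'a \<Rightarrow> int" where
  "cinv X r' n s = (if s \<in> topspace X \<and> 0 \<le> n then \<lfloor>Cf (1/r') $ nat n\<rfloor> else 0)"

lemma floor_Ints: "x \<in> \<int> \<Longrightarrow> real_of_int \<lfloor>x\<rfloor> = x"
  by (metis Ints_cases floor_of_int)

lemma const_lcst: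
  assumes "\<And>s t. s \<in> topspace X \<Longrightarrow> t \<in> topspace X \<Longrightarrow> h s = h t"
  shows "lcst X h"
  unfolding lcst_def
proof
  fix s assume s: "s \<in> topspace X"
  have "\<forall>t\<in>topspace X. h t = h s" using assms s by blast
  then show "\<exists>V. openin X V \<and> s \<in> V \<and> (\<forall>t\<in>V. h t = h s)" using s openin_topspace by blast
qed

lemma gen_lb: "\<forall>n<0. \<forall>s. gen X r' n s = 0" by (simp add: gen_def)
lemma cinv_lb: "\<forall>n<0. \<forall>s. cinv X r' n s = 0" by (simp add: cinv_def)
lemma gen_lcst: "lcst X (gen X r' n)" by (rule const_lcst) (simp add: gen_def)
lemma cinv_lcst: "lcst X (cinv X r' n)" by (rule const_lcst) (simp add: cinv_def)
lemma gen_out: "\<forall>n s. s \<notin> topspace X \<longrightarrow> gen X r' n s = 0" by (simp add: gen_def)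
lemma cinv_out: "\<forall>n s. s \<notin> topspace X \<longrightarrow> cinv X r' n s = 0" by (simp add: cinv_def)

lemma shf_gen: "s \<in> topspace X \<Longrightarrow> shf (gen X r') 0 s = Gf (1/r')"
  by (rule fps_ext) (simp add: shf_nth gen_def floor_Ints Gf_int)

lemma shf_cinv: "s \<in> topspace X \<Longrightarrow> shf (cinv X r') 0 s = Cf (1/r')"
  by (rule fps_ext) (simp add: shf_nth cinv_def floor_Ints Cf_int)

lemma suminf_abs_nonneg: "summable (\<lambda>p. \<bar>F $ p\<bar> * r^p) \<Longrightarrow> 0 \<le> r \<Longrightarrow> 0 \<le> (\<Sum>p. \<bar>F $ p\<bar> * (r::real)^p)"
  by (rule suminf_nonneg) auto

lemma gen_ZT:
  assumes "0 < r" "r < 1"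
  shows "gen X r' \<in> ZT X r"
proof (rule ZT_I[OF assms(1) gen_lb gen_lcst gen_out])
  fix s assume s: "s \<in> topspace X"
  show "summable (\<lambda>p. \<bar>shf (gen X r') 0 s $ p\<bar> * r^p)"
    using sG[of r] assms by (simp add: shf_gen[OF s])
  show "r powi 0 * (\<Sum>p. \<bar>shf (gen X r') 0 s $ p\<bar> * r^p) \<le> (\<Sum>p. \<bar>Gf (1/r') $ p\<bar> * r^p)"
    by (simp add: shf_gen[OF s])
qed

lemma theta_gen:
  assumes "0 < r'" "r' < 1" "s \<in> topspace X"
  shows "theta r' (gen X r') s = 0"
proof -
  have "theta r' (gen X r') s = r' powi 0 * (\<Sum>p. shf (gen X r') 0 s $ p * r'^p)"
    by (rule theta_shf[OF assms(1) gen_lb]) (use sG[of r' "1/r'"] assms in \<open>simp add: shf_gen\<close>)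
  also have "\<dots> = 0" using theta_G[OF assms(1,2)] by (simp add: shf_gen[OF assms(3)])
  finally show ?thesis .
qed

lemma shf_mult:
  assumes "\<forall>n<Ka. \<forall>s. a n s = 0" "\<forall>n<Kb. \<forall>s. b n s = 0"
  shows "shf (ls_mult a b) (Ka + Kb) s = shf a Ka s * shf b Kb s"
  by (rule fps_ext) (simp add: shf_nth LM_shift[OF assms])

lemma LM_out:
  assumes "\<forall>n s. s \<notin> topspace X \<longrightarrow> a n s = 0"
  shows "\<forall>n s. s \<notin> topspace X \<longrightarrow> ls_mult a b n s = 0"
  using assms by (simp add: ls_mult_def)

lemma ls_mult_ZT:
  assumes a: "a \<in> ZT X r" and b: "b \<in> ZT X r" and r: "0 < r"
  shows "ls_mult a b \<in> ZT X r"
proof -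
  obtain Ka ca where Ka: "\<forall>n<Ka. \<forall>s. a n s = 0" "\<And>n. lcst X (a n)" "\<forall>n s. s \<notin> topspace X \<longrightarrow> a n s = 0"
    "\<And>s. s \<in> topspace X \<Longrightarrow> summable (\<lambda>p. \<bar>shf a Ka s $ p\<bar> * r^p)"
    "\<And>s. s \<in> topspace X \<Longrightarrow> r powi Ka * (\<Sum>p. \<bar>shf a Ka s $ p\<bar> * r^p) \<le> ca"
    by (rule ZT_D[OF a r]) blast
  obtain Kb cb where Kb: "\<forall>n<Kb. \<forall>s. b n s = 0" "\<And>n. lcst X (b n)" "\<forall>n s. s \<notin> topspace X \<longrightarrow> b n s = 0"
    "\<And>s. s \<in> topspace X \<Longrightarrow> summable (\<lambda>p. \<bar>shf b Kb s $ p\<bar> * r^p)"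
    "\<And>s. s \<in> topspace X \<Longrightarrow> r powi Kb * (\<Sum>p. \<bar>shf b Kb s $ p\<bar> * r^p) \<le> cb"
    by (rule ZT_D[OF b r]) blast
  show ?thesis
  proof (rule ZT_I[OF r LM_lb[OF Ka(1) Kb(1)] LM_lcst[OF Ka(1) Kb(1) Ka(2) Kb(2)] LM_out[OF Ka(3)]])
    fix s assume s: "s \<in> topspace X"
    have sh: "shf (ls_mult a b) (Ka + Kb) s = shf a Ka s * shf b Kb s" by (rule shf_mult[OF Ka(1) Kb(1)])
    show "summable (\<lambda>p. \<bar>shf (ls_mult a b) (Ka + Kb) s $ p\<bar> * r^p)"
      unfolding sh by (rule fps_cauchy(1)[OF _ Ka(4)[OF s] Kb(4)[OF s]]) (use r in auto)
    have le: "(\<Sum>p. \<bar>(shf a Ka s * shf b Kb s) $ p\<bar> * r^p) \<le> (\<Sum>p. \<bar>shf a Ka s $ p\<bar> * r^p) * (\<Sum>p. \<bar>shf b Kb s $ p\<bar> * r^p)"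
      by (rule fps_cauchy(2)[OF _ Ka(4)[OF s] Kb(4)[OF s]]) (use r in auto)
    define x where "x = r powi Ka * (\<Sum>p. \<bar>shf a Ka s $ p\<bar> * r^p)"
    define y where "y = r powi Kb * (\<Sum>p. \<bar>shf b Kb s $ p\<bar> * r^p)"
    have x0: "0 \<le> x" unfolding x_def using r suminf_abs_nonneg[OF Ka(4)[OF s]] by simp
    have y0: "0 \<le> y" unfolding y_def using r suminf_abs_nonneg[OF Kb(4)[OF s]] by simp
    have pk: "r powi (Ka + Kb) = r powi Ka * r powi Kb" using r by (simp add: power_int_add)
    have "r powi (Ka + Kb) * (\<Sum>p. \<bar>shf (ls_mult a b) (Ka + Kb) s $ p\<bar> * r^p)
        \<le> r powi (Ka + Kb) * ((\<Sum>p. \<bar>shf a Ka s $ p\<bar> * r^p) * (\<Sum>p. \<bar>shf b Kb s $ p\<bar> * r^p))"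
      unfolding sh using le r by (intro mult_left_mono) auto
    also have "\<dots> = x * y" by (simp add: x_def y_def pk mult_ac)
    also have "\<dots> \<le> ca * cb"
      using Ka(5)[OF s] Kb(5)[OF s] x0 y0 by (intro mult_mono) (auto simp: x_def y_def)
    finally show "r powi (Ka + Kb) * (\<Sum>p. \<bar>shf (ls_mult a b) (Ka + Kb) s $ p\<bar> * r^p) \<le> ca * cb" .
  qed
qed

lemma theta_mult:
  assumes a: "a \<in> ZT X r" and b: "b \<in> ZT X r" and r: "0 < r'" "r' < r" and s: "s \<in> topspace X"
  shows "theta r' (ls_mult a b) s = theta r' a s * theta r' b s"
proof -
  have r0: "0 < r" using r by simp
  obtain Ka ca where Ka0: "\<forall>n<Ka. \<forall>s. a n s = 0" "\<And>n. lcst X (a n)" "\<forall>n s. s \<notin> topspace X \<longrightarrow> a n s = 0"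
    "\<And>s. s \<in> topspace X \<Longrightarrow> summable (\<lambda>p. \<bar>shf a Ka s $ p\<bar> * r^p)"
    "\<And>s. s \<in> topspace X \<Longrightarrow> r powi Ka * (\<Sum>p. \<bar>shf a Ka s $ p\<bar> * r^p) \<le> ca"
    by (rule ZT_D[OF a r0]) blast
  obtain Kb cb where Kb0: "\<forall>n<Kb. \<forall>s. b n s = 0" "\<And>n. lcst X (b n)" "\<forall>n s. s \<notin> topspace X \<longrightarrow> b n s = 0"
    "\<And>s. s \<in> topspace X \<Longrightarrow> summable (\<lambda>p. \<bar>shf b Kb s $ p\<bar> * r^p)"
    "\<And>s. s \<in> topspace X \<Longrightarrow> r powi Kb * (\<Sum>p. \<bar>shf b Kb s $ p\<bar> * r^p) \<le> cb"
    by (rule ZT_D[OF b r0]) blast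
  note Ka = Ka0(1,4) and Kb = Kb0(1,4)
  have sa: "summable (\<lambda>p. \<bar>shf a Ka s $ p\<bar> * r'^p)"
    by (rule summable_smaller[OF Ka(2)[OF s]]) (use r in auto)
  have sb: "summable (\<lambda>p. \<bar>shf b Kb s $ p\<bar> * r'^p)"
    by (rule summable_smaller[OF Kb(2)[OF s]]) (use r in auto)
  have sh: "shf (ls_mult a b) (Ka + Kb) s = shf a Ka s * shf b Kb s" by (rule shf_mult[OF Ka(1) Kb(1)])
  have sab: "summable (\<lambda>p. \<bar>shf (ls_mult a b) (Ka + Kb) s $ p\<bar> * r'^p)"
    unfolding sh by (rule fps_cauchy(1)[OF _ sa sb]) (use r in auto)
  have "theta r' (ls_mult a b) s = r' powi (Ka + Kb) * (\<Sum>p. shf (ls_mult a b) (Ka + Kb) s $ p * r'^p)"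
    by (rule theta_shf[OF r(1) LM_lb[OF Ka(1) Kb(1)] sab])
  also have "\<dots> = r' powi (Ka + Kb) * ((\<Sum>p. shf a Ka s $ p * r'^p) * (\<Sum>p. shf b Kb s $ p * r'^p))"
    unfolding sh using fps_cauchy(3)[OF _ sa sb] r by simp
  also have "\<dots> = (r' powi Ka * (\<Sum>p. shf a Ka s $ p * r'^p)) * (r' powi Kb * (\<Sum>p. shf b Kb s $ p * r'^p))"
    using r by (simp add: power_int_add mult_ac)
  also have "\<dots> = theta r' a s * theta r' b s"
    using theta_shf[OF r(1) Ka(1) sa] theta_shf[OF r(1) Kb(1) sb] by simp
  finally show ?thesis .
qed




lemma cont_bounded:
  assumes "compact_space X" "continuous_map X euclideanreal f"
  obtains N :: nat where "\<And>s. s \<in> topspace X \<Longrightarrow> \<bar>f s\<bar> \<le> real N"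
proof -
  have "compactin euclideanreal (f ` topspace X)"
    using image_compactin assms unfolding compact_space_def by blast
  then have "bounded (f ` topspace X)" by (simp add: compact_imp_bounded)
  then obtain B where B: "\<forall>x\<in>f ` topspace X. \<bar>x\<bar> \<le> B" unfolding bounded_real by blast
  obtain N :: nat where "B \<le> real N" using real_arch_simple by blast
  show ?thesis
  proof (rule that)
    fix s assume s: "s \<in> topspace X"
    then have "\<bar>f s\<bar> \<le> B" using B by blast
    then show "\<bar>f s\<bar> \<le> real N" using \<open>B \<le> real N\<close> by linarith
  qed
qed

lemma approx_int:
  assumes ed: "extremally_disconnected X" and f: "continuous_map X euclideanreal f"
  shows "\<exists>h :: 'a \<Rightarrow> int. lcst X h \<and> (\<forall>s. s \<notin> topspace X \<longrightarrow> h s = 0) \<and>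
           (\<forall>s\<in>topspace X. real_of_int (h s) \<le> f s \<and> f s \<le> real_of_int (h s) + 1)"
proof -
  have cs: "compact_space X" and eo: "\<And>U. openin X U \<Longrightarrow> openin X (X closure_of U)"
    using ed unfolding extremally_disconnected_def by auto
  obtain N :: nat where N: "\<And>s. s \<in> topspace X \<Longrightarrow> \<bar>f s\<bar> \<le> real N" using cont_bounded[OF cs f] by blast
  define Cm where "Cm m = X closure_of {s \<in> topspace X. f s \<in> {real_of_int m<..}}" for m :: int
  have op: "openin X (Cm m)" for m
    unfolding Cm_def by (intro eo openin_continuous_map_preimage[OF f]) auto
  have cl: "closedin X (Cm m)" for m unfolding Cm_def by simp
  have ge: "real_of_int m \<le> f s" if "s \<in> Cm m" for m s
  proof -
    have "closedin X {s \<in> topspace X. f s \<in> {real_of_int m..}}"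
      by (intro closedin_continuous_map_preimage[OF f]) auto
    then have "Cm m \<subseteq> {s \<in> topspace X. f s \<in> {real_of_int m..}}"
      unfolding Cm_def by (intro closure_of_minimal) auto
    then show ?thesis using that by auto
  qed
  have gt: "s \<in> Cm m" if "s \<in> topspace X" "f s > real_of_int m" for m s
    unfolding Cm_def using that closure_of_subset[of "{s \<in> topspace X. f s \<in> {real_of_int m<..}}" X] by auto
  have sub: "Cm m \<subseteq> topspace X" for m unfolding Cm_def by (rule closure_of_subset_topspace)
  define I where "I = {- int N - 1 .. int N}"
  define M where "M s = {m \<in> I. s \<in> Cm m}" for s
  define h where "h s = (if s \<in> topspace X then Max (M s) else 0)" for s
  have finM: "finite (M s)" for s by (rule finite_subset[of _ I]) (auto simp: M_def I_def)
  have inM: "- int N - 1 \<in> M s" if "s \<in> topspace X" for s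
  proof -
    have "f s > real_of_int (- int N - 1)" using N[OF that] by simp
    then show ?thesis unfolding M_def I_def using gt[OF that] by simp
  qed
  have hM: "h s \<in> M s" if "s \<in> topspace X" for s
    unfolding h_def using that finM inM by (simp add: Max_in[OF finM] del: Max_in) (metis Max_in empty_iff finM)
  have bounds: "real_of_int (h s) \<le> f s \<and> f s \<le> real_of_int (h s) + 1" if s: "s \<in> topspace X" for s
  proof
    show "real_of_int (h s) \<le> f s" using hM[OF s] ge unfolding M_def by auto
    show "f s \<le> real_of_int (h s) + 1"
    proof (cases "h s + 1 \<in> I")
      case True
      have "h s + 1 \<notin> M s"
      proof
        assume "h s + 1 \<in> M s"
        then have "h s + 1 \<le> Max (M s)" using finM by simp
        then show False using s unfolding h_def by simp
      qed
      then have "s \<notin> Cm (h s + 1)" using True unfolding M_def by simp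
      then have "\<not> f s > real_of_int (h s + 1)" using gt[OF s] by blast
      then show ?thesis by simp
    next
      case False
      have "h s \<in> I" using hM[OF s] unfolding M_def by simp
      then have "h s = int N" using False unfolding I_def by auto
      then show ?thesis using N[OF s] by simp
    qed
  qed
  have lc: "lcst X h"
    unfolding lcst_def
  proof
    fix s assume s: "s \<in> topspace X"
    define V where "V = (\<Inter>m\<in>I. (if s \<in> Cm m then Cm m else topspace X - Cm m)) \<inter> topspace X"
    have "openin X V" unfolding V_def
      by (rule openin_INT) (auto simp: I_def op cl openin_diff)
    moreover have "s \<in> V" unfolding V_def using s by auto
    moreover have "\<forall>t\<in>V. h t = h s"
    proof
      fix t assume t: "t \<in> V"
      then have tX: "t \<in> topspace X" unfolding V_def by simp
      have "\<And>m. m \<in> I \<Longrightarrow> (t \<in> Cm m \<longleftrightarrow> s \<in> Cm m)"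
      proof -
        fix m assume m: "m \<in> I"
        then have "t \<in> (if s \<in> Cm m then Cm m else topspace X - Cm m)" using t unfolding V_def by blast
        then show "t \<in> Cm m \<longleftrightarrow> s \<in> Cm m" by (cases "s \<in> Cm m") auto
      qed
      then have "M t = M s" unfolding M_def by blast
      then show "h t = h s" unfolding h_def using s tX by simp
    qed
    ultimately show "\<exists>V. openin X V \<and> s \<in> V \<and> (\<forall>t\<in>V. h t = h s)" by blast
  qed
  show ?thesis
    by (rule exI[of _ h]) (use lc bounds in \<open>auto simp: h_def\<close>)
qed




definition Hop :: "'a topology \<Rightarrow> ('a \<Rightarrow> real) \<Rightarrow> 'a \<Rightarrow> int" where
  "Hop X f = (SOME h. lcst X h \<and> (\<forall>s. s \<notin> topspace X \<longrightarrow> h s = 0) \<and>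
           (\<forall>s\<in>topspace X. real_of_int (h s) \<le> f s \<and> f s \<le> real_of_int (h s) + 1))"

lemma Hop:
  assumes "extremally_disconnected X" "continuous_map X euclideanreal f"
  shows "lcst X (Hop X f) \<and> (\<forall>s. s \<notin> topspace X \<longrightarrow> Hop X f s = 0) \<and>
           (\<forall>s\<in>topspace X. real_of_int (Hop X f s) \<le> f s \<and> f s \<le> real_of_int (Hop X f s) + 1)"
  unfolding Hop_def by (rule someI_ex[OF approx_int[OF assms]])

primrec Rs :: "'a topology \<Rightarrow> real \<Rightarrow> ('a \<Rightarrow> real) \<Rightarrow> nat \<Rightarrow> 'a \<Rightarrow> real" where
  "Rs X r' f 0 = f"
| "Rs X r' f (Suc n) = (\<lambda>s. Rs X r' f n s - real_of_int (Hop X (\<lambda>s. Rs X r' f n s / r'^n) s) * r'^n)"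

definition dig :: "'a topology \<Rightarrow> real \<Rightarrow> ('a \<Rightarrow> real) \<Rightarrow> nat \<Rightarrow> 'a \<Rightarrow> int" where
  "dig X r' f n = Hop X (\<lambda>s. Rs X r' f n s / r'^n)"

context
  fixes X :: "'a topology" and r' :: real and f :: "'a \<Rightarrow> real"
  assumes ed: "extremally_disconnected X" and fc: "continuous_map X euclideanreal f"
    and r: "0 < r'" "r' < 1"
begin

lemma Rs_cont: "continuous_map X euclideanreal (Rs X r' f n)"
proof (induction n)
  case 0 then show ?case using fc by simp
next
  case (Suc n)
  have c1: "continuous_map X euclideanreal (\<lambda>s. Rs X r' f n s / r'^n)"
    by (rule continuous_map_real_divide[OF Suc continuous_map_const[THEN iffD2]]) (use r in auto)
  have "lcst X (Hop X (\<lambda>s. Rs X r' f n s / r'^n))" using Hop[OF ed c1] by blast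
  then have "lcst X (\<lambda>s. real_of_int (Hop X (\<lambda>s. Rs X r' f n s / r'^n) s))" by (rule lcst_comp)
  then have c2: "continuous_map X euclideanreal (\<lambda>s. real_of_int (Hop X (\<lambda>s. Rs X r' f n s / r'^n) s))"
    by (rule lcst_cont_real)
  have c3: "continuous_map X euclideanreal (\<lambda>s. real_of_int (Hop X (\<lambda>s. Rs X r' f n s / r'^n) s) * r'^n)"
    by (rule continuous_map_real_mult[OF c2 continuous_map_const[THEN iffD2]]) simp
  show ?case unfolding Rs.simps by (rule continuous_map_diff[OF Suc c3])
qed

lemma dig_prop: "lcst X (dig X r' f n) \<and> (\<forall>s. s \<notin> topspace X \<longrightarrow> dig X r' f n s = 0) \<and>
  (\<forall>s\<in>topspace X. real_of_int (dig X r' f n s) \<le> Rs X r' f n s / r'^n \<and> Rs X r' f n s / r'^n \<le> real_of_int (dig X r' f n s) + 1)"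
proof -
  have c1: "continuous_map X euclideanreal (\<lambda>s. Rs X r' f n s / r'^n)"
    by (rule continuous_map_real_divide[OF Rs_cont continuous_map_const[THEN iffD2]]) (use r in auto)
  show ?thesis unfolding dig_def by (rule Hop[OF ed c1])
qed

lemma Rs_Suc: "Rs X r' f (Suc n) s = Rs X r' f n s - real_of_int (dig X r' f n s) * r'^n"
  by (simp add: dig_def)

declare Rs.simps(2)[simp del]

lemma Rs_bound: "s \<in> topspace X \<Longrightarrow> 0 \<le> Rs X r' f (Suc n) s \<and> Rs X r' f (Suc n) s \<le> r'^n"
proof -
  assume s: "s \<in> topspace X"
  have d: "real_of_int (dig X r' f n s) \<le> Rs X r' f n s / r'^n" "Rs X r' f n s / r'^n \<le> real_of_int (dig X r' f n s) + 1"
    using dig_prop s by blast+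
  have p: "r'^n > 0" using r by simp
  have "real_of_int (dig X r' f n s) * r'^n \<le> Rs X r' f n s" using d(1) p by (simp add: field_simps)
  moreover have "Rs X r' f n s \<le> real_of_int (dig X r' f n s) * r'^n + r'^n" using d(2) p by (simp add: field_simps)
  ultimately show ?thesis by (simp add: Rs_Suc)
qed

lemma dig_bound:
  assumes N: "\<And>s. s \<in> topspace X \<Longrightarrow> \<bar>f s\<bar> \<le> real N"
  shows "\<bar>real_of_int (dig X r' f n s)\<bar> \<le> real N + 1 / r' + 1"
proof (cases "s \<in> topspace X")
  case False
  then have "dig X r' f n s = 0" using dig_prop by blast
  then show ?thesis using r by simp
next
  case s: True
  have d: "real_of_int (dig X r' f n s) \<le> Rs X r' f n s / r'^n" "Rs X r' f n s / r'^n \<le> real_of_int (dig X r' f n s) + 1"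
    using dig_prop s by blast+
  have ir: "1 / r' > 0" using r by simp
  show ?thesis
  proof (cases n)
    case 0
    have e: "Rs X r' f n s / r'^n = f s" using 0 by simp
    have "f s \<le> real N" "- f s \<le> real N" using N[OF s] by (simp_all add: abs_le_iff)
    then show ?thesis using d e ir unfolding abs_le_iff by linarith
  next
    case (Suc m)
    have b: "0 \<le> Rs X r' f n s" "Rs X r' f n s \<le> r'^m" using Rs_bound[OF s, of m] Suc by auto
    have "Rs X r' f n s / r'^n \<le> r'^m / r'^n" using b r by (intro divide_right_mono) auto
    also have "r'^m / r'^n = 1 / r'" using r Suc by simp
    finally have u: "Rs X r' f n s / r'^n \<le> 1 / r'" .
    have l: "0 \<le> Rs X r' f n s / r'^n" using b r by simp
    show ?thesis using d u l ir unfolding abs_le_iff by linarith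
  qed
qed

lemma partial: "(\<Sum>n<M. real_of_int (dig X r' f n s) * r'^n) = f s - Rs X r' f M s"
  by (induction M) (simp_all add: Rs_Suc)

lemma dig_sums: "s \<in> topspace X \<Longrightarrow> (\<lambda>n. real_of_int (dig X r' f n s) * r'^n) sums f s"
proof -
  assume s: "s \<in> topspace X"
  have "(\<lambda>M. Rs X r' f M s) \<longlonglongrightarrow> 0"
  proof (rule Lim_null_comparison)
    show "\<forall>\<^sub>F M in sequentially. norm (Rs X r' f M s) \<le> r'^M / r'"
      unfolding eventually_sequentially
    proof (intro exI allI impI)
      fix M :: nat assume "1 \<le> M"
      then obtain m where M: "M = Suc m" by (cases M) auto
      have "r'^M / r' = r'^m" using r M by simp
      then show "norm (Rs X r' f M s) \<le> r'^M / r'" using Rs_bound[OF s, of m] M by simp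
    qed
    show "(\<lambda>M. r'^M / r') \<longlonglongrightarrow> 0"
      using tendsto_divide_zero[OF LIMSEQ_power_zero[of r'], of r'] r by simp
  qed
  then have "(\<lambda>M. f s - Rs X r' f M s) \<longlonglongrightarrow> f s - 0" by (intro tendsto_diff tendsto_const)
  then show ?thesis unfolding sums_def partial by simp
qed

end




lemma surj_part:
  assumes ed: "extremally_disconnected X" and fc: "continuous_map X euclideanreal f"
    and r: "0 < r'" "r' < r" "r < 1"
  shows "\<exists>a\<in>ZT X r. \<forall>s\<in>topspace X. theta r' a s = f s"
proof -
  have r1: "r' < 1" "0 < r" using r by auto
  have cs: "compact_space X" using ed unfolding extremally_disconnected_def by auto
  obtain N :: nat where N: "\<And>s. s \<in> topspace X \<Longrightarrow> \<bar>f s\<bar> \<le> real N" using cont_bounded[OF cs fc] by blast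
  define D where "D = real N + 1 / r' + 1"
  have D0: "0 \<le> D" using r by (simp add: D_def)
  have db: "\<bar>real_of_int (dig X r' f n s)\<bar> \<le> D" for n s
    unfolding D_def by (rule dig_bound[OF ed fc r(1) r1(1) N])
  define a where "a n s = (if 0 \<le> n then dig X r' f (nat n) s else 0)" for n s
  have lb: "\<forall>n<0. \<forall>s. a n s = 0" by (simp add: a_def)
  have lc: "lcst X (a n)" for n
  proof (cases "0 \<le> n")
    case True
    then have "a n = dig X r' f (nat n)" by (simp add: a_def fun_eq_iff)
    then show ?thesis using dig_prop[OF ed fc r(1) r1(1)] by simp
  next
    case False
    then have "a n = (\<lambda>s. 0)" by (simp add: a_def fun_eq_iff)
    then show ?thesis by (simp add: lcst_const)
  qed
  have out: "\<forall>n s. s \<notin> topspace X \<longrightarrow> a n s = 0"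
    using dig_prop[OF ed fc r(1) r1(1)] by (simp add: a_def)
  have sh: "shf a 0 s $ p = real_of_int (dig X r' f p s)" for s p by (simp add: shf_nth a_def)
  have sm: "summable (\<lambda>p. \<bar>shf a 0 s $ p\<bar> * \<rho>^p)" if "0 \<le> \<rho>" "\<rho> < 1" for s \<rho>
  proof (rule summable_comparison_test'[of "\<lambda>p. D * \<rho>^p" 0])
    show "summable (\<lambda>p. D * \<rho>^p)" using that by (intro summable_mult summable_geometric) auto
    fix p :: nat
    show "norm (\<bar>shf a 0 s $ p\<bar> * \<rho>^p) \<le> D * \<rho>^p"
      using db[of p s] that by (simp add: sh abs_mult mult_right_mono)
  qed
  have aZT: "a \<in> ZT X r"
  proof (rule ZT_I[OF r1(2) lb lc out])
    fix s assume s: "s \<in> topspace X"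
    show "summable (\<lambda>p. \<bar>shf a 0 s $ p\<bar> * r^p)" using sm r by auto
    have "(\<Sum>p. \<bar>shf a 0 s $ p\<bar> * r^p) \<le> (\<Sum>p. D * r^p)"
    proof (rule suminf_le)
      fix p show "\<bar>shf a 0 s $ p\<bar> * r^p \<le> D * r^p" using db[of p s] r by (simp add: sh mult_right_mono)
      show "summable (\<lambda>p. \<bar>shf a 0 s $ p\<bar> * r^p)" using sm r by auto
      show "summable (\<lambda>p. D * r^p)" using r by (intro summable_mult summable_geometric) auto
    qed
    then show "r powi 0 * (\<Sum>p. \<bar>shf a 0 s $ p\<bar> * r^p) \<le> (\<Sum>p. D * r^p)" by simp
  qed
  have "\<forall>s\<in>topspace X. theta r' a s = f s"
  proof
    fix s assume s: "s \<in> topspace X"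
    have "theta r' a s = r' powi 0 * (\<Sum>p. shf a 0 s $ p * r'^p)"
      by (rule theta_shf[OF r(1) lb sm]) (use r in auto)
    also have "\<dots> = (\<Sum>p. real_of_int (dig X r' f p s) * r'^p)" by (simp add: sh)
    also have "\<dots> = f s" using dig_sums[OF ed fc r(1) r1(1) s] by (simp add: sums_iff)
    finally show "theta r' a s = f s" .
  qed
  then show ?thesis using aZT by blast
qed

lemma nzd:
  assumes b: "b \<in> ZT X r" and r: "0 < r" and z: "ls_mult (gen X r') b = (\<lambda>n s. 0)"
  shows "b = (\<lambda>n s. 0)"
proof (intro ext)
  fix n s
  obtain Kb cb where Kb: "\<forall>n<Kb. \<forall>s. b n s = 0" "\<And>n. lcst X (b n)" "\<forall>n s. s \<notin> topspace X \<longrightarrow> b n s = 0"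
    "\<And>s. s \<in> topspace X \<Longrightarrow> summable (\<lambda>p. \<bar>shf b Kb s $ p\<bar> * r^p)"
    "\<And>s. s \<in> topspace X \<Longrightarrow> r powi Kb * (\<Sum>p. \<bar>shf b Kb s $ p\<bar> * r^p) \<le> cb"
    by (rule ZT_D[OF b r]) blast
  show "b n s = 0"
  proof (cases "s \<in> topspace X \<and> Kb \<le> n")
    case False
    then show ?thesis using Kb(1,3) by auto
  next
    case True
    then have s: "s \<in> topspace X" and n: "Kb \<le> n" by auto
    have "Gf (1/r') * shf b Kb s = 0"
    proof (rule fps_ext)
      fix p
      have "(Gf (1/r') * shf b Kb s) $ p = (shf (gen X r') 0 s * shf b Kb s) $ p" by (simp add: shf_gen[OF s])
      also have "\<dots> = real_of_int (ls_mult (gen X r') b (0 + Kb + int p) s)"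
        by (rule LM_shift[OF gen_lb Kb(1), symmetric])
      also have "\<dots> = 0" using z by simp
      finally show "(Gf (1/r') * shf b Kb s) $ p = (0 :: real fps) $ p" by simp
    qed
    then have "Cf (1/r') * (Gf (1/r') * shf b Kb s) = 0" by simp
    then have "shf b Kb s = 0" using GC[of "1/r'"] by (simp add: mult.assoc[symmetric] mult.commute[of "Cf (1/r')"])
    then have "shf b Kb s $ nat (n - Kb) = 0" by simp
    then show ?thesis using n by (simp add: shf_nth)
  qed
qed

lemma image_sub:
  assumes b: "b \<in> ZT X r" and r: "0 < r'" "r' < r" "r < 1"
  shows "ls_mult (gen X r') b \<in> ZT X r \<and> (\<forall>s\<in>topspace X. theta r' (ls_mult (gen X r') b) s = 0)"
proof
  have g: "gen X r' \<in> ZT X r" by (rule gen_ZT) (use r in auto)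
  show "ls_mult (gen X r') b \<in> ZT X r" by (rule ls_mult_ZT[OF g b]) (use r in auto)
  show "\<forall>s\<in>topspace X. theta r' (ls_mult (gen X r') b) s = 0"
  proof
    fix s assume s: "s \<in> topspace X"
    have "theta r' (ls_mult (gen X r') b) s = theta r' (gen X r') s * theta r' b s"
      by (rule theta_mult[OF g b r(1,2) s])
    also have "theta r' (gen X r') s = 0" by (rule theta_gen) (use r s in auto)
    finally show "theta r' (ls_mult (gen X r') b) s = 0" by simp
  qed
qed




lemma ker_sub:
  assumes a: "a \<in> ZT X r" and th: "\<forall>s\<in>topspace X. theta r' a s = 0"
    and r: "0 < r'" "r' < r" "r < 1"
  shows "\<exists>b\<in>ZT X r. a = ls_mult (gen X r') b"
proof -
  have r0: "0 < r" using r by simp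
  obtain Ka ca where Ka: "\<forall>n<Ka. \<forall>s. a n s = 0" "\<And>n. lcst X (a n)" "\<forall>n s. s \<notin> topspace X \<longrightarrow> a n s = 0"
    "\<And>s. s \<in> topspace X \<Longrightarrow> summable (\<lambda>p. \<bar>shf a Ka s $ p\<bar> * r^p)"
    "\<And>s. s \<in> topspace X \<Longrightarrow> r powi Ka * (\<Sum>p. \<bar>shf a Ka s $ p\<bar> * r^p) \<le> ca"
    by (rule ZT_D[OF a r0]) blast
  define bb where "bb = ls_mult a (cinv X r')"
  define NW where "NW = (\<Sum>n. \<bar>Wf (1/r') $ n\<bar> * r^n)"
  have sW': "summable (\<lambda>n. \<bar>Wf (1/r') $ n\<bar> * r^n)" using sW r by auto
  have NW0: "0 \<le> NW" unfolding NW_def by (rule suminf_abs_nonneg[OF sW']) (use r in auto)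
  have bblb: "\<forall>n<Ka. \<forall>s. bb n s = 0" using LM_lb[OF Ka(1) cinv_lb] by (simp add: bb_def)
  have shbb: "shf bb Ka s = shf a Ka s * Cf (1/r')" if s: "s \<in> topspace X" for s
    using shf_mult[OF Ka(1) cinv_lb, where s=s] shf_cinv[OF s] by (simp add: bb_def)
  have bbZT: "bb \<in> ZT X r"
  proof (rule ZT_I[OF r0 bblb])
    show "lcst X (bb n)" for n unfolding bb_def by (rule LM_lcst[OF Ka(1) cinv_lb Ka(2) cinv_lcst])
    show "\<forall>n s. s \<notin> topspace X \<longrightarrow> bb n s = 0" unfolding bb_def by (rule LM_out[OF Ka(3)])
  next
    fix s assume s: "s \<in> topspace X"
    define A where "A = shf a Ka s"
    have sA: "summable (\<lambda>n. \<bar>A $ n\<bar> * r^n)" using Ka(4)[OF s] by (simp add: A_def)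
    have sAr': "summable (\<lambda>n. \<bar>A $ n\<bar> * r'^n)" by (rule summable_smaller[OF sA]) (use r in auto)
    have "theta r' a s = r' powi Ka * (\<Sum>p. A $ p * r'^p)"
      unfolding A_def by (rule theta_shf[OF r(1) Ka(1)]) (use sAr' A_def in simp)
    then have z: "(\<Sum>p. A $ p * r'^p) = 0" using th s r by simp
    have eq: "shf bb Ka s = (A * Geo (1/r')) * Wf (1/r')"
      using shbb[OF s] by (simp add: A_def Cf_def mult_ac)
    have sV: "summable (\<lambda>n. \<bar>(A * Geo (1/r'))$n\<bar> * r^n)" by (rule tail_bound(1)[OF r(1,2) sA z])
    have NV: "(\<Sum>n. \<bar>(A * Geo (1/r'))$n\<bar> * r^n) \<le> r'/(r - r') * (\<Sum>n. \<bar>A$n\<bar> * r^n)"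
      by (rule tail_bound(2)[OF r(1,2) sA z])
    show "summable (\<lambda>p. \<bar>shf bb Ka s $ p\<bar> * r^p)"
      unfolding eq by (rule fps_cauchy(1)[OF _ sV sW']) (use r in auto)
    have le1: "(\<Sum>p. \<bar>shf bb Ka s $ p\<bar> * r^p) \<le> (\<Sum>n. \<bar>(A * Geo (1/r'))$n\<bar> * r^n) * NW"
      unfolding eq NW_def by (rule fps_cauchy(2)[OF _ sV sW']) (use r in auto)
    have pk: "0 < r powi Ka" using r by simp
    have "r powi Ka * (\<Sum>p. \<bar>shf bb Ka s $ p\<bar> * r^p) \<le> r powi Ka * ((\<Sum>n. \<bar>(A * Geo (1/r'))$n\<bar> * r^n) * NW)"
      using le1 pk by (intro mult_left_mono) auto
    also have "\<dots> \<le> r powi Ka * ((r'/(r - r') * (\<Sum>n. \<bar>A$n\<bar> * r^n)) * NW)"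
      using NV pk NW0 by (intro mult_left_mono mult_right_mono) auto
    also have "\<dots> = (r'/(r - r') * NW) * (r powi Ka * (\<Sum>n. \<bar>A$n\<bar> * r^n))" by (simp add: mult_ac)
    also have "\<dots> \<le> (r'/(r - r') * NW) * ca"
      using Ka(5)[OF s] NW0 r by (intro mult_left_mono) (auto simp: A_def)
    finally show "r powi Ka * (\<Sum>p. \<bar>shf bb Ka s $ p\<bar> * r^p) \<le> (r'/(r - r') * NW) * ca" .
  qed
  have "a = ls_mult (gen X r') bb"
  proof (intro ext)
    fix n s
    show "a n s = ls_mult (gen X r') bb n s"
    proof (cases "s \<in> topspace X")
      case False
      then show ?thesis using Ka(3) LM_out[OF gen_out, of X r' bb] by simp
    next
      case s: True
      show ?thesis
      proof (cases "n < Ka")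
        case True
        then show ?thesis using Ka(1) LM_lb[OF gen_lb bblb, of X r'] by simp
      next
        case False
        then have n: "n \<ge> 0 + Ka" by simp
        have "real_of_int (ls_mult (gen X r') bb n s) = (shf (gen X r') 0 s * shf bb Ka s) $ nat (n - (0 + Ka))"
          by (rule LM_shift'[OF gen_lb bblb n])
        also have "\<dots> = ((Gf (1/r') * Cf (1/r')) * shf a Ka s) $ nat (n - Ka)"
          by (simp add: shf_gen[OF s] shbb[OF s] mult_ac)
        also have "\<dots> = real_of_int (a n s)" using n by (simp add: GC shf_nth)
        finally show ?thesis by simp
      qed
    qed
  qed
  then show ?thesis using bbZT by blast
qed

theorem mainTheorem10:
  fixes r r' :: real and X :: "'a topology"
  assumes "0 < r'" and "r' < r" and "r < 1"
    and "extremally_disconnected X"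
  shows "(\<forall>f. continuous_map X euclideanreal f \<longrightarrow>
            (\<exists>a\<in>ZT X r. \<forall>s\<in>topspace X. theta r' a s = f s))
       \<and> (\<exists>g\<in>ZT X r.
            (\<forall>b\<in>ZT X r. ls_mult g b = (\<lambda>n s. 0) \<longrightarrow> b = (\<lambda>n s. 0)) \<and>
            {a\<in>ZT X r. \<forall>s\<in>topspace X. theta r' a s = 0} = {ls_mult g b | b. b \<in> ZT X r})"
proof -
  have A: "\<forall>f. continuous_map X euclideanreal f \<longrightarrow> (\<exists>a\<in>ZT X r. \<forall>s\<in>topspace X. theta r' a s = f s)"
    using surj_part[OF assms(4) _ assms(1,2,3)] by blast
  have B: "gen X r' \<in> ZT X r" by (rule gen_ZT) (use assms in auto)
  have C: "\<forall>b\<in>ZT X r. ls_mult (gen X r') b = (\<lambda>n s. 0) \<longrightarrow> b = (\<lambda>n s. 0)"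
  proof (intro ballI impI)
    fix b assume b1: "b \<in> ZT X r" and b2: "ls_mult (gen X r') b = (\<lambda>n s. 0)"
    have r0: "0 < r" using assms by simp
    show "b = (\<lambda>n s. 0)" by (rule nzd[OF b1 r0 b2])
  qed
  have D: "{a \<in> ZT X r. \<forall>s\<in>topspace X. theta r' a s = 0} = {ls_mult (gen X r') b |b. b \<in> ZT X r}"
  proof (intro equalityI subsetI)
    fix a assume "a \<in> {a \<in> ZT X r. \<forall>s\<in>topspace X. theta r' a s = 0}"
    then have "a \<in> ZT X r" "\<forall>s\<in>topspace X. theta r' a s = 0" by auto
    then obtain b where "b \<in> ZT X r" "a = ls_mult (gen X r') b" using ker_sub assms by blast
    then show "a \<in> {ls_mult (gen X r') b |b. b \<in> ZT X r}" by blast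
  next
    fix x assume "x \<in> {ls_mult (gen X r') b |b. b \<in> ZT X r}"
    then obtain b where b: "b \<in> ZT X r" "x = ls_mult (gen X r') b" by blast
    then show "x \<in> {a \<in> ZT X r. \<forall>s\<in>topspace X. theta r' a s = 0}"
      using image_sub[OF b(1) assms(1,2,3)] by simp
  qed
  show ?thesis using A B C D by blast
qed


end
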